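(* Let $z:[0,\infty)\to X_{0+}$ be a solution of the modified Becker–Döring equations obtained by the truncation construction described in the context, and let $\omega$ be its weak-$*$ $\omega$-limit set. Then $\{z(t):t\ge0\}$ is relatively compact in the weak-$*$ topology of $X$, and $\omega$ contains at least one equilibrium state $z^\infty\in X_{0+}$ with $$\rho_\infty:=\rho(z^\infty)\in[0,\rho_0]\quad\text{and}\quad\tilde A(z^\infty)=\lim_{t\to\infty}\tilde A(z(t)).$$ Moreover, if $\omega=\{z^\infty\}$, then $z(t)\to z^\infty$ weak-$*$ in $X$ as $t\to\infty$, and this convergence is strong in $X$ if and only if $\rho_\infty=\rho_0$.
   Context: Let $(q_l)_{l\ge1}$ be positive with $q_1=1$, $0<R:=\lim_l q_l/q_{l+1}<\infty$, and $\gamma_l>0$ with $\gamma_l/l\to0$. $X=\{z:\|z\|_X:=\sum_l l|z_l|<\infty\}$, the dual of $\{z:z_l/l\to0\}$; a sequence in $X$ converges weak-$*$ iff it is norm-bounded and converges componentwise. $X_{0+}$: nonnegative elements; $\rho(z)=\sum_l lz_l$, $N(z)=\sum_lz_l$, $J_l(z)=\gamma_l\big(z_1z_l-N(z)\frac{q_l}{q_{l+1}}z_{l+1}\big)$ ($l\ge1$), $J_0(z)=-\sum_{l\ge1}J_l(z)$; an equilibrium state is $z\in X_{0+}$ with $J_l(z)=0$ for all $l\ge0$. $A(z)=\sum_lz_l\ln(z_l/(q_lN(z)))$, $\tilde A(z)=\sum_l z_l\ln(z_l/(\tilde q_lN(z)))$ with $\tilde q_l=q_lR^l$ ($0\ln0=0$,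 value $0$ at $z=0$). Fix $y\in X_{0+}$ with $y_1>0$, $\rho_0:=\rho(y)>0$. For $m\ge2$ let $z^{(m)}$ solve $\dot z_l=J_{l-1}(z)-J_l(z)$ ($2\le l\le m-1$), $\dot z_m=J_{m-1}(z)$, $\dot z_1=-J_1(z)-\sum_{l=1}^{m-1}J_l(z)$, $z_l(0)=y_l$ ($l\le m$), $z_l\equiv0$ for $l>m$. The solution $z$ is a continuous $[0,\infty)\to X$ map with $z^{(m_j)}_l\to z_l$ uniformly on compacts for every $l$ along some subsequence $m_j\to\infty$; it satisfies $z(t)\in X_{0+}$, $\rho(z(t))=\rho_0$, and $A(z(t))$ is nonincreasing. $\omega=\{w\in X: w=\text{weak-}*\lim_k z(t_k)\text{ for some }t_k\to\infty\}$. *)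

theory Defs
  imports "HOL-Analysis.Analysis"
begin

text \<open>Sequences z = (z_l)_{l>=1} are modelled as functions nat => real; the
  unused index 0 is required to be 0 for elements of X.\<close>

definition Xsp :: "(nat \<Rightarrow> real) set" where
  "Xsp = {z. z 0 = 0 \<and> summable (\<lambda>l. real l * \<bar>z l\<bar>)}"

definition Xnorm :: "(nat \<Rightarrow> real) \<Rightarrow> real" where
  "Xnorm z = (\<Sum>l. real l * \<bar>z l\<bar>)"

definition X0p :: "(nat \<Rightarrow> real) set" where
  "X0p = {z \<in> Xsp. \<forall>l. z l \<ge> 0}"

definition rho :: "(nat \<Rightarrow> real) \<Rightarrow> real" where
  "rho z = (\<Sum>l. real l * z l)"

definition Ntot :: "(nat \<Rightarrow> real) \<Rightarrow> real" where
  "Ntot z = (\<Sum>l. z l)"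

definition predual :: "(nat \<Rightarrow> real) set" where
  "predual = {f. (\<lambda>l. f (Suc l) / real (Suc l)) \<longlonglongrightarrow> 0}"

definition pairing :: "(nat \<Rightarrow> real) \<Rightarrow> (nat \<Rightarrow> real) \<Rightarrow> real" where
  "pairing f z = (\<Sum>l. f (Suc l) * z (Suc l))"

definition weakstar :: "(nat \<Rightarrow> real) topology" where
  "weakstar = topology_generated_by
     {{z \<in> Xsp. pairing f z \<in> U} | f U. f \<in> predual \<and> open U}"

definition Jflux :: "(nat \<Rightarrow> real) \<Rightarrow> (nat \<Rightarrow> real) \<Rightarrow> (nat \<Rightarrow> real) \<Rightarrow> nat \<Rightarrow> real" where
  "Jflux gam q z l =
     (if l = 0 then - (\<Sum>k. gam (Suc k) * (z 1 * z (Suc k) - Ntot z * q (Suc k) / q (Suc (Suc k)) * z (Suc (Suc k))))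
      else gam l * (z 1 * z l - Ntot z * q l / q (Suc l) * z (Suc l)))"

definition equilibrium :: "(nat \<Rightarrow> real) \<Rightarrow> (nat \<Rightarrow> real) \<Rightarrow> (nat \<Rightarrow> real) \<Rightarrow> bool" where
  "equilibrium gam q z \<longleftrightarrow> z \<in> X0p \<and> (\<forall>l. Jflux gam q z l = 0)"

text \<open>Real ln 0 = 0 and x/0 = 0 in Isabelle, giving the conventions 0 ln 0 = 0
  and value 0 at z = 0.\<close>
definition Afun :: "(nat \<Rightarrow> real) \<Rightarrow> (nat \<Rightarrow> real) \<Rightarrow> real" where
  "Afun q z = (\<Sum>l. z (Suc l) * ln (z (Suc l) / (q (Suc l) * Ntot z)))"

definition Atil :: "(nat \<Rightarrow> real) \<Rightarrow> real \<Rightarrow> (nat \<Rightarrow> real) \<Rightarrow> real" where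
  "Atil q R z = Afun (\<lambda>l. q l * R ^ l) z"

definition truncated_solution ::
  "(nat \<Rightarrow> real) \<Rightarrow> (nat \<Rightarrow> real) \<Rightarrow> (nat \<Rightarrow> real) \<Rightarrow> nat \<Rightarrow> (real \<Rightarrow> nat \<Rightarrow> real) \<Rightarrow> bool" where
  "truncated_solution gam q y m zm \<longleftrightarrow>
     (\<forall>t\<ge>0. \<forall>l. (l = 0 \<or> l > m) \<longrightarrow> zm t l = 0) \<and>
     (\<forall>l. 1 \<le> l \<and> l \<le> m \<longrightarrow> zm 0 l = y l) \<and>
     (\<forall>t\<ge>0.
        ((\<lambda>s. zm s 1) has_real_derivative
            (- Jflux gam q (zm t) 1 - (\<Sum>k=1..m-1. Jflux gam q (zm t) k))) (at t within {0..}) \<and>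
        (\<forall>l. 2 \<le> l \<and> l \<le> m - 1 \<longrightarrow>
           ((\<lambda>s. zm s l) has_real_derivative
               (Jflux gam q (zm t) (l - 1) - Jflux gam q (zm t) l)) (at t within {0..})) \<and>
        ((\<lambda>s. zm s m) has_real_derivative Jflux gam q (zm t) (m - 1)) (at t within {0..}))"

end

theory Submission
  imports Defs "HOL-Real_Asymp.Real_Asymp"
begin


lemma X0pD:
  assumes "z \<in> X0p"
  shows "z 0 = 0" "\<And>l. z l \<ge> 0" "summable (\<lambda>l. real l * z l)"
proof -
  show "z 0 = 0" using assms by (auto simp: X0p_def Xsp_def)
  show "\<And>l. z l \<ge> 0" using assms by (auto simp: X0p_def)
  have "summable (\<lambda>l. real l * \<bar>z l\<bar>)" using assms by (auto simp: X0p_def Xsp_def)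
  moreover have "\<And>l. \<bar>z l\<bar> = z l" using assms by (auto simp: X0p_def)
  ultimately show "summable (\<lambda>l. real l * z l)" by simp
qed

lemma le_l_mult: "l \<noteq> 0 \<Longrightarrow> 0 \<le> (x::real) \<Longrightarrow> x \<le> real l * x"
proof -
  assume "l \<noteq> 0" "0 \<le> x"
  then have "1 \<le> real l" by simp
  then have "1 * x \<le> real l * x" using \<open>0 \<le> x\<close> by (rule mult_right_mono)
  then show ?thesis by simp
qed

lemma X0p_rho_nonneg: assumes "z \<in> X0p" shows "rho z \<ge> 0"
  unfolding rho_def by (rule suminf_nonneg) (use X0pD[OF assms] in \<open>simp_all add: mult_nonneg_nonneg\<close>)

lemma X0p_term_le_rho:
  assumes "z \<in> X0p" shows "real l * z l \<le> rho z"
proof -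
  have "sum (\<lambda>l. real l * z l) {l} \<le> suminf (\<lambda>l. real l * z l)"
    by (rule sum_le_suminf) (use X0pD[OF assms] in \<open>simp_all add: mult_nonneg_nonneg\<close>)
  then show ?thesis by (simp add: rho_def)
qed

lemma X0p_comp_le_rho:
  assumes "z \<in> X0p" shows "z l \<le> rho z"
proof (cases "l = 0")
  case True then show ?thesis using X0pD[OF assms] X0p_rho_nonneg[OF assms] by simp
next
  case False
  then have "z l \<le> real l * z l" using X0pD(2)[OF assms, of l] by (rule le_l_mult)
  then show ?thesis using X0p_term_le_rho[OF assms, of l] by simp
qed

lemma X0p_summable:
  assumes "z \<in> X0p" shows "summable z"
proof (rule summable_comparison_test'[OF X0pD(3)[OF assms], of 0])
  fix n :: nat
  show "norm (z n) \<le> real n * z n"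
  proof (cases "n = 0")
    case True then show ?thesis using X0pD[OF assms] by simp
  next
    case False
    then show ?thesis using le_l_mult[OF False X0pD(2)[OF assms, of n]] X0pD(2)[OF assms, of n] by simp
  qed
qed

lemma X0p_Ntot_nonneg: "z \<in> X0p \<Longrightarrow> Ntot z \<ge> 0"
  unfolding Ntot_def by (rule suminf_nonneg) (auto intro: X0p_summable simp: X0pD)

lemma X0p_Ntot_le_rho:
  assumes "z \<in> X0p" shows "Ntot z \<le> rho z"
  unfolding Ntot_def rho_def
proof (rule suminf_le[OF _ X0p_summable[OF assms] X0pD(3)[OF assms]])
  fix n show "z n \<le> real n * z n"
  proof (cases "n = 0")
    case True then show ?thesis using X0pD[OF assms] by simp
  next
    case False
    show ?thesis using le_l_mult[OF False X0pD(2)[OF assms, of n]] .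
  qed
qed

lemma X0p_tail:
  assumes "z \<in> X0p" "L > 0"
  shows "(\<Sum>n. z (n + L)) \<le> rho z / real L"
proof -
  have s1: "summable (\<lambda>n. real (n + L) * z (n + L))"
    using X0pD(3)[OF assms(1)] summable_iff_shift[of "\<lambda>n. real n * z n" L] by simp
  have s2: "summable (\<lambda>n. z (n + L))"
    using X0p_summable[OF assms(1)] summable_iff_shift[of z L] by simp
  have "(\<Sum>n. z (n + L)) \<le> (\<Sum>n. real (n + L) * z (n + L) / real L)"
  proof (rule suminf_le)
    fix n
    have "real L \<le> real (n + L)" by simp
    then have "real L * z (n + L) \<le> real (n + L) * z (n + L)"
      using X0pD(2)[OF assms(1), of "n+L"] by (rule mult_right_mono)
    then show "z (n + L) \<le> real (n + L) * z (n + L) / real L"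
      using assms(2) by (simp add: pos_le_divide_eq mult.commute)
  qed (use s1 s2 summable_divide in auto)
  also have "\<dots> = (\<Sum>n. real (n + L) * z (n + L)) / real L"
    using suminf_divide[OF s1] by simp
  also have "(\<Sum>n. real (n + L) * z (n + L)) \<le> rho z"
  proof -
    have "rho z = (\<Sum>n. real (n + L) * z (n + L)) + (\<Sum>n<L. real n * z n)"
      unfolding rho_def using suminf_split_initial_segment[OF X0pD(3)[OF assms(1)], of L] by simp
    moreover have "(\<Sum>n<L. real n * z n) \<ge> 0" by (intro sum_nonneg) (use X0pD(2)[OF assms(1)] in auto)
    ultimately show ?thesis by linarith
  qed
  then have "(\<Sum>n. real (n + L) * z (n + L)) / real L \<le> rho z / real L"
    using assms by (simp add: divide_right_mono)
  finally show ?thesis .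
qed

lemma approx_tendsto:
  fixes F :: "'a \<Rightarrow> real" and FL :: "nat \<Rightarrow> 'a \<Rightarrow> real"
  assumes approx: "\<And>e. e > 0 \<Longrightarrow> \<exists>L. \<forall>x\<in>K. \<bar>F x - FL L x\<bar> \<le> e"
    and conv: "\<And>L. (\<lambda>k. FL L (w k)) \<longlonglongrightarrow> FL L v"
    and wK: "\<And>k. w k \<in> K" and vK: "v \<in> K"
  shows "(\<lambda>k. F (w k)) \<longlonglongrightarrow> F v"
proof (rule LIMSEQ_I)
  fix r :: real assume r: "r > 0"
  obtain L where L: "\<forall>x\<in>K. \<bar>F x - FL L x\<bar> \<le> r / 4" using approx[of "r/4"] r by auto
  obtain N where N: "\<forall>k\<ge>N. norm (FL L (w k) - FL L v) < r / 4"
    using LIMSEQ_D[OF conv[of L], of "r/4"] r by auto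
  show "\<exists>N. \<forall>k\<ge>N. norm (F (w k) - F v) < r"
  proof (intro exI allI impI)
    fix k assume "k \<ge> N"
    then have "\<bar>FL L (w k) - FL L v\<bar> < r/4" using N by auto
    moreover have "\<bar>F (w k) - FL L (w k)\<bar> \<le> r/4" using L wK by auto
    moreover have "\<bar>F v - FL L v\<bar> \<le> r/4" using L vK by auto
    ultimately show "norm (F (w k) - F v) < r" using r unfolding real_norm_def by linarith
  qed
qed

lemma predual_bounded:
  assumes "f \<in> predual" shows "\<exists>B. \<forall>l. \<bar>f (Suc l)\<bar> \<le> B * real (Suc l)"
proof -
  have "convergent (\<lambda>l. f (Suc l) / real (Suc l))" using assms unfolding predual_def convergent_def by auto
  then have "Bseq (\<lambda>l. f (Suc l) / real (Suc l))" using convergent_imp_Bseq by blast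
  then obtain B where B: "\<And>l. \<bar>f (Suc l) / real (Suc l)\<bar> \<le> B" unfolding Bseq_def real_norm_def by (metis less_eq_real_def)
  show ?thesis
  proof (intro exI allI)
    fix l
    have "\<bar>f (Suc l)\<bar> = \<bar>f (Suc l) / real (Suc l)\<bar> * real (Suc l)" by (simp add: abs_divide)
    also have "\<dots> \<le> B * real (Suc l)" using B[of l] by (intro mult_right_mono) auto
    finally show "\<bar>f (Suc l)\<bar> \<le> B * real (Suc l)" .
  qed
qed

lemma pairing_summable:
  assumes "f \<in> predual" "z \<in> Xsp"
  shows "summable (\<lambda>l. f (Suc l) * z (Suc l))"
proof -
  obtain B where B: "\<And>l. \<bar>f (Suc l)\<bar> \<le> B * real (Suc l)" using predual_bounded[OF assms(1)] by auto
  have s: "summable (\<lambda>l. real l * \<bar>z l\<bar>)" using assms(2) by (auto simp: Xsp_def)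
  then have "summable (\<lambda>l. real (Suc l) * \<bar>z (Suc l)\<bar>)" using summable_Suc_iff[of "\<lambda>l. real l * \<bar>z l\<bar>"] by simp
  then have "summable (\<lambda>l. B * (real (Suc l) * \<bar>z (Suc l)\<bar>))" by (rule summable_mult)
  then show ?thesis
  proof (rule summable_comparison_test'[of _ 0])
    fix n
    have "norm (f (Suc n) * z (Suc n)) = \<bar>f (Suc n)\<bar> * \<bar>z (Suc n)\<bar>" by (simp add: abs_mult)
    also have "\<dots> \<le> B * real (Suc n) * \<bar>z (Suc n)\<bar>" using B[of n] by (intro mult_right_mono) auto
    finally show "norm (f (Suc n) * z (Suc n)) \<le> B * (real (Suc n) * \<bar>z (Suc n)\<bar>)" by simp
  qed
qed

lemma X0p_Xsp: "z \<in> X0p \<Longrightarrow> z \<in> Xsp" by (simp add: X0p_def)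

lemma pairing_tail:
  assumes f: "f \<in> predual" and e: "e > 0" and M: "M \<ge> 0"
  shows "\<exists>L. \<forall>z\<in>{z\<in>X0p. rho z \<le> M}. \<bar>pairing f z - (\<Sum>l<L. f (Suc l) * z (Suc l))\<bar> \<le> e"
proof -
  have "(\<lambda>l. f (Suc l) / real (Suc l)) \<longlonglongrightarrow> 0" using f by (simp add: predual_def)
  moreover have "e / (M + 1) > 0" using e M by simp
  ultimately obtain L where L0: "\<forall>l\<ge>L. norm (f (Suc l) / real (Suc l) - 0) < e / (M + 1)"
    using LIMSEQ_D by blast
  then have L: "\<And>l. l \<ge> L \<Longrightarrow> \<bar>f (Suc l) / real (Suc l)\<bar> < e / (M + 1)" by simp
  show ?thesis
  proof (intro exI ballI)
    fix z assume "z \<in> {z\<in>X0p. rho z \<le> M}"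
    then have z: "z \<in> X0p" "rho z \<le> M" by auto
    have sp: "summable (\<lambda>l. f (Suc l) * z (Suc l))" using pairing_summable[OF f X0p_Xsp[OF z(1)]] .
    have eq: "pairing f z - (\<Sum>l<L. f (Suc l) * z (Suc l)) = (\<Sum>n. f (Suc (n + L)) * z (Suc (n + L)))"
      unfolding pairing_def using suminf_split_initial_segment[OF sp, of L] by simp
    have sr: "summable (\<lambda>n. real (Suc (n + L)) * z (Suc (n + L)))"
    proof -
      have "summable (\<lambda>n. real (Suc n) * z (Suc n))" using X0pD(3)[OF z(1)] summable_Suc_iff[of "\<lambda>n. real n * z n"] by simp
      then show ?thesis using summable_iff_shift[of "\<lambda>n. real (Suc n) * z (Suc n)" L] by simp
    qed
    have "norm (\<Sum>n. f (Suc (n + L)) * z (Suc (n + L))) \<le> (\<Sum>n. e / (M + 1) * (real (Suc (n + L)) * z (Suc (n + L))))"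
    proof (rule norm_suminf_le)
      fix n
      have zn: "z (Suc (n + L)) \<ge> 0" using X0pD(2)[OF z(1)] by auto
      have "\<bar>f (Suc (n + L))\<bar> = \<bar>f (Suc (n + L)) / real (Suc (n + L))\<bar> * real (Suc (n + L))"
        by (simp add: abs_divide)
      also have "\<dots> \<le> e / (M + 1) * real (Suc (n + L))"
        using L[of "n + L"] by (intro mult_right_mono) auto
      finally have "\<bar>f (Suc (n + L))\<bar> * z (Suc (n + L)) \<le> e / (M + 1) * real (Suc (n + L)) * z (Suc (n + L))"
        using zn by (intro mult_right_mono) auto
      then show "norm (f (Suc (n + L)) * z (Suc (n + L))) \<le> e / (M + 1) * (real (Suc (n + L)) * z (Suc (n + L)))"
        using zn by (simp add: abs_mult)
    next
      show "summable (\<lambda>n. e / (M + 1) * (real (Suc (n + L)) * z (Suc (n + L))))"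
        using sr by (rule summable_mult)
    qed
    then have "\<bar>\<Sum>n. f (Suc (n + L)) * z (Suc (n + L))\<bar> \<le> (\<Sum>n. e / (M + 1) * (real (Suc (n + L)) * z (Suc (n + L))))"
      by simp
    also have "\<dots> = e / (M + 1) * (\<Sum>n. real (Suc (n + L)) * z (Suc (n + L)))"
      by (rule suminf_mult[OF sr])
    also have "(\<Sum>n. real (Suc (n + L)) * z (Suc (n + L))) \<le> rho z"
    proof -
      have s0: "summable (\<lambda>l. real l * z l)" using X0pD(3)[OF z(1)] .
      have "rho z = (\<Sum>n. real (n + Suc L) * z (n + Suc L)) + (\<Sum>n<Suc L. real n * z n)"
        unfolding rho_def using suminf_split_initial_segment[OF s0, of "Suc L"] by simp
      moreover have "(\<Sum>n<Suc L. real n * z n) \<ge> 0" by (intro sum_nonneg) (use X0pD(2)[OF z(1)] in auto)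
      ultimately show ?thesis by simp
    qed
    then have "e / (M + 1) * (\<Sum>n. real (Suc (n + L)) * z (Suc (n + L))) \<le> e / (M + 1) * M"
      using z(2) e M by (intro mult_left_mono) auto
    also have "\<dots> = e * (M / (M + 1))" by simp
    also have "\<dots> \<le> e * 1" using e M by (intro mult_left_mono) auto
    also have "\<dots> = e" by simp
    finally show "\<bar>pairing f z - (\<Sum>l<L. f (Suc l) * z (Suc l))\<bar> \<le> e" using eq by simp
  qed
qed

lemma pairing_conv:
  assumes f: "f \<in> predual" and w: "\<And>k. w k \<in> X0p" "\<And>k. rho (w k) \<le> M"
    and v: "v \<in> X0p" "rho v \<le> M" and c: "\<And>l. (\<lambda>k. w k l) \<longlonglongrightarrow> v l"
  shows "(\<lambda>k. pairing f (w k)) \<longlonglongrightarrow> pairing f v"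
proof (rule approx_tendsto[where K = "{z\<in>X0p. rho z \<le> M}" and FL = "\<lambda>L z. \<Sum>l<L. f (Suc l) * z (Suc l)" and F = "pairing f" and w = w and v = v])
  have M: "M \<ge> 0" using X0p_rho_nonneg[OF v(1)] v(2) by linarith
  show "\<exists>L. \<forall>x\<in>{z \<in> X0p. rho z \<le> M}. \<bar>pairing f x - (\<Sum>l<L. f (Suc l) * x (Suc l))\<bar> \<le> e" if "e > 0" for e
    using pairing_tail[OF f that M] by blast
  show "(\<lambda>k. \<Sum>l<L. f (Suc l) * w k (Suc l)) \<longlonglongrightarrow> (\<Sum>l<L. f (Suc l) * v (Suc l))" for L
    by (intro tendsto_sum tendsto_mult tendsto_const c)
qed (use w v in auto)

definition one_f :: "nat \<Rightarrow> real" where "one_f = (\<lambda>_. 1)"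

lemma one_f_predual: "one_f \<in> predual"
  unfolding predual_def one_f_def mem_Collect_eq by (rule LIMSEQ_Suc) (rule lim_inverse_n')

lemma Ntot_pairing: "z \<in> X0p \<Longrightarrow> Ntot z = pairing one_f z"
  unfolding Ntot_def pairing_def one_f_def
  using suminf_split_head[OF X0p_summable] X0pD(1) by fastforce

lemma Ntot_conv:
  assumes w: "\<And>k. w k \<in> X0p" "\<And>k. rho (w k) \<le> M"
    and v: "v \<in> X0p" "rho v \<le> M" and c: "\<And>l. (\<lambda>k. w k l) \<longlonglongrightarrow> v l"
  shows "(\<lambda>k. Ntot (w k)) \<longlonglongrightarrow> Ntot v"
  using pairing_conv[OF one_f_predual w v c] Ntot_pairing w v by simp


section \<open>Weak-* topology\<close>

lemma weakstar_topspace: "topspace weakstar = Xsp"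
proof -
  have "(\<lambda>_. 0) \<in> predual" by (simp add: predual_def)
  then have "Xsp \<in> {{z \<in> Xsp. pairing f z \<in> U} | f U. f \<in> predual \<and> open U}"
    by (intro CollectI exI[of _ "\<lambda>_. 0"] exI[of _ UNIV]) auto
  then show ?thesis unfolding weakstar_def topology_generated_by_topspace by blast
qed

lemma openin_weakstar_basic:
  "f \<in> predual \<Longrightarrow> open U \<Longrightarrow> openin weakstar {z \<in> Xsp. pairing f z \<in> U}"
  unfolding weakstar_def by (rule topology_generated_by_Basis) blast

lemma limitin_generated:
  assumes "l \<in> \<Union>S" and ev: "\<And>U. U \<in> S \<Longrightarrow> l \<in> U \<Longrightarrow> eventually (\<lambda>x. f x \<in> U) F"
  shows "limitin (topology_generated_by S) f l F"
  unfolding limitin_def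
proof (intro conjI allI impI)
  show "l \<in> topspace (topology_generated_by S)" using assms(1) by simp
  fix U assume "openin (topology_generated_by S) U \<and> l \<in> U"
  then have g: "generate_topology_on S U" and lU: "l \<in> U"
    using openin_topology_generated_by by auto
  from g lU show "\<forall>\<^sub>F x in F. f x \<in> U"
  proof (induction)
    case Empty then show ?case by simp
  next
    case (Int a b) then show ?case by (auto intro: eventually_conj elim: eventually_mono)
  next
    case (UN K)
    then obtain k where "k \<in> K" "l \<in> k" by auto
    with UN.IH have "\<forall>\<^sub>F x in F. f x \<in> k" by auto
    then show ?case by (rule eventually_mono) (use \<open>k \<in> K\<close> in auto)
  next
    case (Basis s) then show ?case using ev by auto
  qed
qed

lemma limitin_weakstar_I:
  assumes v: "v \<in> Xsp" and ev: "\<And>f. f \<in> predual \<Longrightarrow> ((\<lambda>x. pairing f (g x)) \<longlongrightarrow> pairing f v) F"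
    and gX: "eventually (\<lambda>x. g x \<in> Xsp) F"
  shows "limitin weakstar g v F"
  unfolding weakstar_def
proof (rule limitin_generated)
  show "v \<in> \<Union> {{z \<in> Xsp. pairing f z \<in> U} | f U. f \<in> predual \<and> open U}"
    using weakstar_topspace v unfolding weakstar_def by simp
  fix U assume U: "U \<in> {{z \<in> Xsp. pairing f z \<in> U} | f U. f \<in> predual \<and> open U}" "v \<in> U"
  then obtain f V where fV: "U = {z \<in> Xsp. pairing f z \<in> V}" "f \<in> predual" "open V" by auto
  have "eventually (\<lambda>x. pairing f (g x) \<in> V) F"
    using ev[OF fV(2)] fV U(2) topological_tendstoD by fastforce
  with gX show "\<forall>\<^sub>F x in F. g x \<in> U" unfolding fV(1) by (auto elim: eventually_elim2)
qed

lemma limitin_weakstar_seq: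
  assumes w: "\<And>k. w k \<in> X0p" "\<And>k. rho (w k) \<le> M"
    and v: "v \<in> X0p" "rho v \<le> M" and c: "\<And>l. (\<lambda>k. w k l) \<longlonglongrightarrow> v l"
  shows "limitin weakstar w v sequentially"
  by (rule limitin_weakstar_I) (use pairing_conv[OF _ w v c] w v X0p_Xsp in auto)

lemma continuous_map_pairing:
  assumes "f \<in> predual" shows "continuous_map weakstar euclidean (pairing f)"
  unfolding continuous_map_def
proof (intro conjI allI impI)
  show "pairing f \<in> topspace weakstar \<rightarrow> topspace euclidean" by simp
  fix U :: "real set" assume "openin euclidean U"
  then have "open U" by simp
  then show "openin weakstar {x \<in> topspace weakstar. pairing f x \<in> U}"
    using openin_weakstar_basic[OF assms] weakstar_topspace by simp
qed

definition ef :: "nat \<Rightarrow> nat \<Rightarrow> real" where "ef l = (\<lambda>k. if k = l then 1 else 0)"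

lemma ef_predual: "ef l \<in> predual"
proof -
  have "\<forall>\<^sub>F k in sequentially. ef l (Suc k) / real (Suc k) = 0"
    unfolding ef_def eventually_sequentially by (intro exI[of _ l]) auto
  then show ?thesis unfolding predual_def by (simp add: tendsto_eventually)
qed

lemma pairing_ef:
  assumes "l \<ge> 1" shows "pairing (ef l) z = z l"
proof -
  have "pairing (ef l) z = (\<Sum>k. if k = l - 1 then z l else 0)"
    unfolding pairing_def ef_def
    by (rule arg_cong[where f = suminf]) (use assms in \<open>auto simp: fun_eq_iff\<close>)
  also have "\<dots> = z l" by (subst suminf_finite[of "{l - 1}"]) auto
  finally show ?thesis .
qed

lemma limitin_weakstar_comp:
  assumes "limitin weakstar g v F" "l \<ge> 1"
  shows "((\<lambda>x. g x l) \<longlongrightarrow> v l) F"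
proof -
  have "limitin euclidean (pairing (ef l) \<circ> g) (pairing (ef l) v) F"
    by (rule continuous_map_limit[OF continuous_map_pairing[OF ef_predual] assms(1)])
  then show ?thesis using pairing_ef[OF assms(2)] by (simp add: o_def limitin_canonical_iff)
qed

lemma limitin_weakstar_pairing:
  assumes "limitin weakstar g v F" "f \<in> predual"
  shows "((\<lambda>x. pairing f (g x)) \<longlongrightarrow> pairing f v) F"
proof -
  have "limitin euclidean (pairing f \<circ> g) (pairing f v) F"
    by (rule continuous_map_limit[OF continuous_map_pairing[OF assms(2)] assms(1)])
  then show ?thesis by (simp add: o_def limitin_canonical_iff)
qed

definition Bset :: "real \<Rightarrow> (nat \<Rightarrow> real) set" where "Bset M = {z \<in> X0p. rho z \<le> M}"

definition pf :: "nat \<Rightarrow> nat \<Rightarrow> real" where "pf L = (\<lambda>k. if k < L then real k else 0)"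

lemma pf_predual: "pf L \<in> predual"
proof -
  have "\<forall>\<^sub>F k in sequentially. pf L (Suc k) / real (Suc k) = 0"
    unfolding pf_def eventually_sequentially by (intro exI[of _ L]) auto
  then show ?thesis unfolding predual_def by (simp add: tendsto_eventually)
qed

lemma pairing_pf: "pairing (pf L) z = (\<Sum>k<L. real k * z k)"
proof -
  have "pairing (pf L) z = (\<Sum>k<L. pf L (Suc k) * z (Suc k))"
    unfolding pairing_def by (rule suminf_finite) (auto simp: pf_def)
  also have "\<dots> = (\<Sum>k<Suc L. pf L k * z k)"
    by (subst sum.lessThan_Suc_shift) (simp add: pf_def)
  also have "\<dots> = (\<Sum>k<L. real k * z k)"
    by (simp add: pf_def)
  finally show ?thesis .
qed

lemma Bset_char:
  "Bset M = {z \<in> Xsp. (\<forall>l\<ge>1. z l \<ge> 0) \<and> (\<forall>L. (\<Sum>k<L. real k * z k) \<le> M)}"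
proof (intro set_eqI iffI)
  fix z assume z: "z \<in> Bset M"
  then have z0: "z \<in> X0p" "rho z \<le> M" by (auto simp: Bset_def)
  have "(\<Sum>k<L. real k * z k) \<le> M" for L
  proof -
    have "(\<Sum>k<L. real k * z k) \<le> suminf (\<lambda>k. real k * z k)"
      by (rule sum_le_suminf) (use X0pD[OF z0(1)] in \<open>simp_all add: mult_nonneg_nonneg\<close>)
    then show ?thesis using z0(2) unfolding rho_def by linarith
  qed
  then show "z \<in> {z \<in> Xsp. (\<forall>l\<ge>1. z l \<ge> 0) \<and> (\<forall>L. (\<Sum>k<L. real k * z k) \<le> M)}"
    using z0(1) X0pD(2)[OF z0(1)] by (auto simp: X0p_def)
next
  fix z assume z: "z \<in> {z \<in> Xsp. (\<forall>l\<ge>1. z l \<ge> 0) \<and> (\<forall>L. (\<Sum>k<L. real k * z k) \<le> M)}"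
  then have zX: "z \<in> Xsp" and zn: "\<And>l. l \<ge> 1 \<Longrightarrow> z l \<ge> 0" and zs: "\<And>L. (\<Sum>k<L. real k * z k) \<le> M"
    by auto
  have z00: "z 0 = 0" using zX by (simp add: Xsp_def)
  have nn: "\<And>l. z l \<ge> 0" using zn z00 by (metis less_one not_le order_refl)
  then have "z \<in> X0p" using zX by (simp add: X0p_def)
  moreover have "rho z \<le> M"
    unfolding rho_def
  proof (rule suminf_le_const[OF _ zs])
    show "summable (\<lambda>l. real l * z l)" using X0pD(3) \<open>z \<in> X0p\<close> by blast
  qed
  ultimately show "z \<in> Bset M" by (simp add: Bset_def)
qed

lemma Bset_closedin: "closedin weakstar (Bset M)"
proof -
  define K where "K = {{z \<in> topspace weakstar. pairing (ef l) z \<in> {0..}} | l. l \<ge> 1}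
      \<union> {{z \<in> topspace weakstar. pairing (pf L) z \<in> {..M}} | L. True}"
  have c1: "closedin weakstar {z \<in> topspace weakstar. pairing (ef l) z \<in> {0..}}" for l
    by (rule closedin_continuous_map_preimage[OF continuous_map_pairing[OF ef_predual]]) simp
  have c2: "closedin weakstar {z \<in> topspace weakstar. pairing (pf L) z \<in> {..M}}" for L
    by (rule closedin_continuous_map_preimage[OF continuous_map_pairing[OF pf_predual]]) simp
  have "closedin weakstar k" if "k \<in> K" for k
    using that c1 c2 unfolding K_def by blast
  moreover have "K \<noteq> {}" unfolding K_def by auto
  ultimately have c: "closedin weakstar (\<Inter>K)" by (rule closedin_Inter[rotated])
  have "\<Inter>K = Bset M"
  proof (intro set_eqI iffI)
    fix z assume z: "z \<in> \<Inter>K"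
    have m1: "z \<in> {z \<in> topspace weakstar. pairing (ef l) z \<in> {0..}}" if "l \<ge> 1" for l
      using z that unfolding K_def by blast
    have m2: "z \<in> {z \<in> topspace weakstar. pairing (pf L) z \<in> {..M}}" for L
      using z unfolding K_def by blast
    have "z \<in> Xsp" using m2[of 0] weakstar_topspace by simp
    moreover have "\<And>l. l \<ge> 1 \<Longrightarrow> z l \<ge> 0" using m1 pairing_ef by simp
    moreover have "\<And>L. (\<Sum>k<L. real k * z k) \<le> M" using m2 pairing_pf by simp
    ultimately show "z \<in> Bset M" unfolding Bset_char by auto
  next
    fix z assume "z \<in> Bset M"
    then have "z \<in> Xsp" "\<And>l. l \<ge> 1 \<Longrightarrow> z l \<ge> 0" "\<And>L. (\<Sum>k<L. real k * z k) \<le> M"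
      unfolding Bset_char by auto
    then show "z \<in> \<Inter>K"
      unfolding K_def by (auto simp: weakstar_topspace pairing_ef pairing_pf)
  qed
  then show ?thesis using c by simp
qed

lemma coord_tendsto:
  fixes u :: "nat \<Rightarrow> nat \<Rightarrow> real"
  assumes "u \<longlonglongrightarrow> a" shows "(\<lambda>n. u n l) \<longlonglongrightarrow> a l"
proof -
  have c: "continuous_on UNIV (\<lambda>x::nat\<Rightarrow>real. x l)" by (rule continuous_on_product_coordinates)
  show ?thesis using continuous_on_tendsto_compose[OF c assms] by simp
qed

lemma Bset_closed: "closed (Bset M)"
proof -
  have "Bset M = {z. z 0 = 0} \<inter> (\<Inter>l. {z. z l \<ge> 0}) \<inter> (\<Inter>L. {z. (\<Sum>k<L. real k * z k) \<le> M})"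
  proof (intro set_eqI iffI)
    fix z assume "z \<in> Bset M"
    then have zX: "z \<in> X0p" by (simp add: Bset_def)
    have "\<forall>L. (\<Sum>k<L. real k * z k) \<le> M" using \<open>z \<in> Bset M\<close> unfolding Bset_char by blast
    then show "z \<in> {z. z 0 = 0} \<inter> (\<Inter>l. {z. z l \<ge> 0}) \<inter> (\<Inter>L. {z. (\<Sum>k<L. real k * z k) \<le> M})"
      using X0pD[OF zX] by simp
  next
    fix z assume z: "z \<in> {z. z 0 = 0} \<inter> (\<Inter>l. {z. z l \<ge> 0}) \<inter> (\<Inter>L. {z. (\<Sum>k<L. real k * z k) \<le> M})"
    then have nn: "\<And>l. z l \<ge> 0" and s: "\<And>L. (\<Sum>k<L. real k * z k) \<le> M" and z0: "z 0 = 0" by auto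
    have "summable (\<lambda>l. real l * \<bar>z l\<bar>)"
      using summableI_nonneg_bounded[of "\<lambda>l. real l * z l", OF _ s] nn by (simp add: mult_nonneg_nonneg)
    then have "z \<in> Xsp" using z0 by (simp add: Xsp_def)
    then show "z \<in> Bset M" unfolding Bset_char using nn s by auto
  qed
  moreover have "closed {z::nat\<Rightarrow>real. z 0 = 0}"
    by (intro closed_Collect_eq continuous_on_product_coordinates continuous_on_const)
  moreover have "closed (\<Inter>l. {z::nat\<Rightarrow>real. z l \<ge> 0})"
    by (intro closed_INT ballI closed_Collect_le continuous_on_product_coordinates continuous_on_const)
  moreover have "closed (\<Inter>L. {z::nat\<Rightarrow>real. (\<Sum>k<L. real k * z k) \<le> M})"
    by (intro closed_INT ballI closed_Collect_le continuous_on_product_coordinates continuous_on_const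
        continuous_on_sum continuous_on_mult)
  ultimately show ?thesis by (simp only: closed_Int)
qed

lemma Bset_compact:
  assumes M: "M \<ge> 0" shows "compact (Bset M)"
proof -
  have "compactin (product_topology (\<lambda>_. euclidean) UNIV) (PiE UNIV (\<lambda>_::nat. {0..M}))"
    by (subst compactin_PiE) auto
  then have c: "compact (PiE UNIV (\<lambda>_::nat. {0..M}))"
    by (simp add: euclidean_product_topology compactin_euclidean_iff)
  have "Bset M \<subseteq> PiE UNIV (\<lambda>_::nat. {0..M})"
  proof
    fix z assume "z \<in> Bset M"
    then have "z \<in> X0p" "rho z \<le> M" by (auto simp: Bset_def)
    then have "z l \<in> {0..M}" for l
      using X0pD(2)[of z l] X0p_comp_le_rho[of z l] by auto
    then show "z \<in> PiE UNIV (\<lambda>_::nat. {0..M})" unfolding PiE_iff by auto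
  qed
  then have "Bset M = PiE UNIV (\<lambda>_::nat. {0..M}) \<inter> Bset M" by blast
  then show ?thesis using compact_Int_closed[OF c Bset_closed[of M]] by simp
qed

lemma Bset_weakstar_compact:
  assumes M: "M \<ge> 0" shows "compactin weakstar (Bset M)"
proof -
  let ?S = "{{z \<in> Xsp. pairing f z \<in> U} | f U. f \<in> predual \<and> open U}"
  have BX: "Bset M \<subseteq> Xsp" by (auto simp: Bset_def X0p_def)
  have "continuous_map (top_of_set (Bset M)) weakstar id"
    unfolding weakstar_def
  proof (rule continuous_on_generated_topo)
    fix U assume "U \<in> ?S"
    then obtain f V where fV: "U = {z \<in> Xsp. pairing f z \<in> V}" "f \<in> predual" "open V" by auto
    have "continuous_on (Bset M) (pairing f)"
    proof (rule continuous_on_sequentiallyI)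
      fix u a assume u: "\<forall>n. u n \<in> Bset M" "a \<in> Bset M" "u \<longlonglongrightarrow> a"
      show "(\<lambda>n. pairing f (u n)) \<longlonglongrightarrow> pairing f a"
        by (rule pairing_conv[OF fV(2), of _ M]) (use u coord_tendsto in \<open>auto simp: Bset_def\<close>)
    qed
    then have "openin (top_of_set (Bset M)) (Bset M \<inter> pairing f -` V)"
      using continuous_openin_preimage_gen fV(3) by blast
    moreover have "id -` U \<inter> topspace (top_of_set (Bset M)) = Bset M \<inter> pairing f -` V"
      using BX fV(1) by auto
    ultimately show "openin (top_of_set (Bset M)) (id -` U \<inter> topspace (top_of_set (Bset M)))" by simp
  next
    show "id ` topspace (top_of_set (Bset M)) \<subseteq> \<Union> ?S"
      using BX weakstar_topspace unfolding weakstar_def by simp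
  qed
  moreover have "compactin (top_of_set (Bset M)) (Bset M)"
    using Bset_compact[OF M] by (simp add: compactin_subtopology compactin_euclidean_iff)
  ultimately show ?thesis using image_compactin by fastforce
qed

lemma Bset_seq:
  fixes x :: "nat \<Rightarrow> nat \<Rightarrow> real"
  assumes M: "M \<ge> 0" and x: "\<And>k. x k \<in> Bset M"
  shows "\<exists>r v. strict_mono r \<and> v \<in> Bset M \<and> (\<forall>l. (\<lambda>k. x (r k) l) \<longlonglongrightarrow> v l)"
proof -
  have "seq_compact (Bset M)" using compact_imp_seq_compact[OF Bset_compact[OF M]] .
  then have "\<forall>f::nat\<Rightarrow>nat\<Rightarrow>real. (\<forall>n. f n \<in> Bset M) \<longrightarrow> (\<exists>v\<in>Bset M. \<exists>r. strict_mono r \<and> (f \<circ> r) \<longlonglongrightarrow> v)"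
    by (simp add: seq_compact_def)
  then have "(\<forall>n. x n \<in> Bset M) \<longrightarrow> (\<exists>v\<in>Bset M. \<exists>r. strict_mono r \<and> (x \<circ> r) \<longlonglongrightarrow> v)"
    by metis
  moreover have "\<forall>n. x n \<in> Bset M" using x by simp
  ultimately have "\<exists>v\<in>Bset M. \<exists>r. strict_mono r \<and> (x \<circ> r) \<longlonglongrightarrow> v"
    by (rule mp)
  then obtain v r where "v \<in> Bset M" "strict_mono r" "(x \<circ> r) \<longlonglongrightarrow> v"
    by blast
  then show ?thesis using coord_tendsto[of "x \<circ> r" v] by (auto simp: o_def)
qed


definition xlnx :: "real \<Rightarrow> real" where "xlnx x = x * ln x"

lemma xlnx_0[simp]: "xlnx 0 = 0" by (simp add: xlnx_def)

lemma xlnx_cont: "continuous_on {0..} xlnx"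
proof -
  have "continuous (at x within {0..}) xlnx" if "x \<in> {0..}" for x
  proof (cases "x = 0")
    case True
    have "(xlnx \<longlongrightarrow> 0) (at_right 0)" unfolding xlnx_def[abs_def] by real_asymp
    then show ?thesis using True
      by (simp add: continuous_within at_within_Ici_at_right)
  next
    case False
    then have "x > 0" using that by simp
    then have "isCont (\<lambda>x. x * ln x) x" by (auto intro!: continuous_intros)
    then show ?thesis unfolding xlnx_def by (rule continuous_at_imp_continuous_within)
  qed
  then show ?thesis using continuous_on_eq_continuous_within by blast
qed

lemma tendsto_xlnx:
  assumes "(f \<longlongrightarrow> a) F" "eventually (\<lambda>x. f x \<ge> 0) F" "a \<ge> 0"
  shows "((\<lambda>x. xlnx (f x)) \<longlongrightarrow> xlnx a) F"
  using continuous_on_tendsto_compose[OF xlnx_cont assms(1)] assms(2,3) by simp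

lemma xlnx_lower:
  assumes x: "0 \<le> x" and p: "0 < p"
  shows "xlnx x \<ge> x * ln p + x - p"
proof (cases "x = 0")
  case True then show ?thesis using p by simp
next
  case False
  then have x0: "x > 0" using x by simp
  have "ln (p / x) \<le> p / x - 1" by (rule ln_le_minus_one) (use x0 p in simp)
  then have "ln p - ln x \<le> p / x - 1" using x0 p by (simp add: ln_div)
  then have "x * (ln p - ln x) \<le> x * (p / x - 1)" using x0 by (intro mult_left_mono) auto
  also have "\<dots> = p - x" using x0 by (simp add: field_simps)
  finally show ?thesis unfolding xlnx_def by (simp add: algebra_simps)
qed

lemma xlnx_upper:
  assumes x: "0 \<le> x" shows "xlnx x \<le> x * (x - 1)"
proof (cases "x = 0")
  case True then show ?thesis by simp
next
  case False
  then have x0: "x > 0" using x by simp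
  have "ln x \<le> x - 1" by (rule ln_le_minus_one) (use x0 in simp)
  then show ?thesis unfolding xlnx_def using x0 by (intro mult_left_mono) auto
qed

lemma xlnx_ge_minus1: "0 \<le> x \<Longrightarrow> xlnx x \<ge> -1"
  using xlnx_lower[of x 1] by simp

lemma xlnx_nonpos: assumes "0 \<le> x" "x \<le> 1" shows "xlnx x \<le> 0"
proof (cases "x = 0")
  case True then show ?thesis by simp
next
  case False
  then have "ln x \<le> 0" using assms by simp
  then show ?thesis unfolding xlnx_def using assms by (simp add: mult_nonneg_nonpos)
qed

lemma negxlnx_bound:
  fixes x n :: real
  assumes x: "0 \<le> x" "x \<le> 1" and n: "1 \<le> n"
  shows "- xlnx x \<le> 4 * x * ln n + 2 / n ^ 2"
proof -
  have lnn: "ln n \<ge> 0" using n by simp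
  have t1: "4 * x * ln n \<ge> 0" using lnn x by simp
  have t2: "2 / n ^ 2 \<ge> 0" by simp
  show ?thesis
  proof (cases "x = 0")
    case True then show ?thesis using t1 t2 by simp
  next
    case False
    then have x0: "x > 0" using x by simp
    show ?thesis
    proof (cases "x \<ge> inverse (n ^ 4)")
      case True
      have "ln (inverse (n ^ 4)) \<le> ln x" using True x0 n by (subst ln_le_cancel_iff) auto
      moreover have "ln (inverse (n ^ 4)) = - (4 * ln n)" using n by (simp add: ln_inverse ln_realpow)
      ultimately have "- ln x \<le> 4 * ln n" by simp
      then have "x * (- ln x) \<le> x * (4 * ln n)" using x0 by (intro mult_left_mono) auto
      moreover have "x * (4 * ln n) = 4 * x * ln n" by (simp add: mult_ac)
      ultimately show ?thesis using t2 unfolding xlnx_def by linarith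
    next
      case False
      then have xs: "x < inverse (n ^ 4)" by simp
      define s where "s = sqrt x"
      have s0: "s > 0" using x0 by (simp add: s_def)
      have ssq: "s * s = x" using x0 by (simp add: s_def)
      have "ln (1 / s) \<le> 1 / s - 1" by (rule ln_le_minus_one) (use s0 in simp)
      then have "- ln s < 1 / s" using s0 by (simp add: ln_div)
      moreover have "ln x = 2 * ln s"
      proof -
        have "ln x = ln (s * s)" using ssq by simp
        also have "\<dots> = ln s + ln s" using s0 by (simp add: ln_mult)
        finally show ?thesis by simp
      qed
      ultimately have "- ln x < 2 / s" by simp
      then have "x * (- ln x) \<le> x * (2 / s)" using x0 by (intro mult_left_mono) auto
      also have "x * (2 / s) = 2 * s" using ssq s0 by (simp add: field_simps)
      also have "s < inverse (n ^ 2)"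
      proof -
        have "s = sqrt x" by (simp add: s_def)
        also have "\<dots> < sqrt (inverse (n ^ 4))" using xs by (simp add: real_sqrt_less_iff)
        also have "sqrt (inverse (n ^ 4)) = inverse (n ^ 2)"
        proof -
          have "n ^ 4 = (n ^ 2) ^ 2" by (simp add: power2_eq_square power4_eq_xxxx mult.assoc)
          then have "sqrt (n ^ 4) = \<bar>n ^ 2\<bar>" by (simp only: real_sqrt_abs)
          then show ?thesis by (simp add: real_sqrt_inverse)
        qed
        finally show ?thesis .
      qed
      then have "2 * s \<le> 2 / n ^ 2" by (simp add: divide_inverse)
      finally show ?thesis using t1 unfolding xlnx_def by simp
    qed
  qed
qed

lemma lin_growth:
  fixes a b :: "nat \<Rightarrow> real"
  assumes d: "\<And>n. \<bar>a (Suc n) - a n\<bar> \<le> b n" and K: "\<And>n. n \<ge> K \<Longrightarrow> b n \<le> e" and e: "e \<ge> 0"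
  shows "\<bar>a n\<bar> \<le> \<bar>a 0\<bar> + (\<Sum>j<K. b j) + e * real n"
proof -
  have bnn: "b n \<ge> 0" for n using d[of n] by linarith
  have "\<bar>a n\<bar> \<le> \<bar>a 0\<bar> + (\<Sum>j<min n K. b j) + e * real n"
  proof (induction n)
    case 0 then show ?case by simp
  next
    case (Suc n)
    have step: "\<bar>a (Suc n)\<bar> \<le> \<bar>a n\<bar> + b n" using d[of n] by linarith
    show ?case
    proof (cases "n < K")
      case True
      then have "min (Suc n) K = Suc n" "min n K = n" by auto
      moreover have "e * real (Suc n) = e * real n + e" by (simp add: algebra_simps)
      ultimately show ?thesis using Suc.IH step e by simp
    next
      case False
      then have "min (Suc n) K = K" "min n K = K" "b n \<le> e" using K[of n] by auto
      moreover have "e * real (Suc n) = e * real n + e" by (simp add: algebra_simps)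
      ultimately show ?thesis using Suc.IH step by simp
    qed
  qed
  moreover have "(\<Sum>j<min n K. b j) \<le> (\<Sum>j<K. b j)"
    by (rule sum_mono2) (use bnn in auto)
  ultimately show ?thesis by linarith
qed

lemma growth_o:
  fixes a :: "nat \<Rightarrow> real"
  assumes "(\<lambda>n. a (Suc n) - a n) \<longlonglongrightarrow> 0"
  shows "(\<lambda>n. a n / real (Suc n)) \<longlonglongrightarrow> 0"
proof (rule LIMSEQ_I)
  fix r :: real assume r: "r > 0"
  obtain K where K: "\<forall>n\<ge>K. norm (a (Suc n) - a n - 0) < r / 2"
    using LIMSEQ_D[OF assms, of "r/2"] r by auto
  define A where "A = \<bar>a 0\<bar> + (\<Sum>j<K. \<bar>a (Suc j) - a j\<bar>)"
  have A0: "A \<ge> 0" unfolding A_def by (intro add_nonneg_nonneg sum_nonneg) auto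
  have bound: "\<bar>a n\<bar> \<le> A + r / 2 * real n" for n
    unfolding A_def
    by (rule lin_growth[where b = "\<lambda>n. \<bar>a (Suc n) - a n\<bar>"]) (use K r in \<open>auto simp: less_imp_le\<close>)
  have "(\<lambda>n. A * inverse (real (Suc n))) \<longlonglongrightarrow> A * 0"
    by (intro tendsto_mult tendsto_const LIMSEQ_inverse_real_of_nat)
  then have lim: "(\<lambda>n. A * inverse (real (Suc n))) \<longlonglongrightarrow> 0" by simp
  obtain N where N: "\<forall>n\<ge>N. norm (A * inverse (real (Suc n)) - 0) < r / 2"
    using LIMSEQ_D[OF lim, of "r/2"] r by auto
  show "\<exists>N. \<forall>n\<ge>N. norm (a n / real (Suc n) - 0) < r"
  proof (intro exI allI impI)
    fix n assume "n \<ge> N"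
    then have "norm (A * inverse (real (Suc n)) - 0) < r / 2" using N by blast
    then have "\<bar>A * inverse (real (Suc n))\<bar> < r / 2" by (simp only: real_norm_def diff_0_right)
    moreover have "A * inverse (real (Suc n)) \<ge> 0" using A0 by simp
    moreover have "A / real (Suc n) = A * inverse (real (Suc n))" by (simp only: divide_inverse)
    ultimately have a1: "A / real (Suc n) < r / 2" by linarith
    have "\<bar>a n\<bar> / real (Suc n) \<le> (A + r / 2 * real n) / real (Suc n)"
      using bound[of n] by (simp add: divide_right_mono)
    also have "\<dots> = A / real (Suc n) + r / 2 * (real n / real (Suc n))" by (simp add: add_divide_distrib)
    also have "r / 2 * (real n / real (Suc n)) \<le> r / 2 * 1"
      using r by (intro mult_left_mono) auto
    finally have "\<bar>a n\<bar> / real (Suc n) \<le> A / real (Suc n) + r / 2 * 1" by simp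
    then have "\<bar>a n\<bar> / real (Suc n) < r" using a1 by linarith
    then show "norm (a n / real (Suc n) - 0) < r" by (simp add: abs_divide)
  qed
qed


lemma ln_ratio:
  fixes x y :: real
  assumes "x > 0" "y > 0" shows "ln (x / y) = ln x - ln y"
  using assms by (rule ln_divide_pos)

lemma lnq_lin:
  assumes q_pos: "\<forall>l\<ge>1. q l > 0" and q1: "q 1 = 1"
    and R_lim: "(\<lambda>l. q (Suc l) / q (Suc (Suc l))) \<longlonglongrightarrow> R" and R_pos: "0 < R"
  shows "\<exists>B\<ge>0. \<forall>l\<ge>1. \<bar>ln (q l)\<bar> \<le> B * real l"
proof -
  define c where "c n = ln (q (Suc n) / q (Suc (Suc n)))" for n
  have "c \<longlonglongrightarrow> ln R" unfolding c_def by (intro tendsto_ln R_lim) (use R_pos in simp)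
  then have "Bseq c" using convergent_imp_Bseq convergent_def by blast
  then obtain B where B: "B > 0" "\<And>n. norm (c n) \<le> B" unfolding Bseq_def by blast
  define a where "a n = ln (q (Suc n))" for n
  have d: "\<bar>a (Suc n) - a n\<bar> \<le> B" for n
  proof -
    have "q (Suc n) > 0" "q (Suc (Suc n)) > 0" using q_pos by auto
    then have "c n = a n - a (Suc n)" unfolding c_def a_def by (rule ln_ratio)
    then show ?thesis using B(2)[of n] by simp
  qed
  have "\<bar>a n\<bar> \<le> \<bar>a 0\<bar> + (\<Sum>j<(0::nat). B) + B * real n" for n
    by (rule lin_growth[of a "\<lambda>_. B" 0 B n]) (use d B in auto)
  moreover have "a 0 = 0" using q1 by (simp add: a_def)
  ultimately have an: "\<bar>ln (q (Suc n))\<bar> \<le> B * real n" for n unfolding a_def by (metis add_0 sum.empty lessThan_0 abs_0)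
  show ?thesis
  proof (intro exI conjI allI impI)
    show "B \<ge> 0" using B by simp
    fix l :: nat assume "l \<ge> 1"
    then obtain n where "l = Suc n" by (cases l) auto
    moreover have "B * real n \<le> B * real (Suc n)" using B by simp
    ultimately show "\<bar>ln (q l)\<bar> \<le> B * real l" using an[of n] by simp
  qed
qed

lemma lnqt_predual:
  assumes q_pos: "\<forall>l\<ge>1. q l > 0"
    and R_lim: "(\<lambda>l. q (Suc l) / q (Suc (Suc l))) \<longlonglongrightarrow> R" and R_pos: "0 < R"
  shows "(\<lambda>l. ln (q l * R ^ l)) \<in> predual"
proof -
  define a where "a n = ln (q (Suc n) * R ^ Suc n)" for n
  define c where "c n = ln (q (Suc n) / q (Suc (Suc n)))" for n
  have "c \<longlonglongrightarrow> ln R" unfolding c_def by (intro tendsto_ln R_lim) (use R_pos in simp)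
  then have lim: "(\<lambda>n. ln R - c n) \<longlonglongrightarrow> 0" using tendsto_diff[OF tendsto_const[of "ln R"]] by fastforce
  have "a (Suc n) - a n = ln R - c n" for n
  proof -
    have p1: "q (Suc n) > 0" "q (Suc (Suc n)) > 0" using q_pos by auto
    have "a (Suc n) = ln (q (Suc (Suc n))) + real (Suc (Suc n)) * ln R"
      unfolding a_def using p1 R_pos by (simp add: ln_mult ln_realpow algebra_simps)
    moreover have "a n = ln (q (Suc n)) + real (Suc n) * ln R"
      unfolding a_def using p1 R_pos by (simp add: ln_mult ln_realpow algebra_simps)
    moreover have "c n = ln (q (Suc n)) - ln (q (Suc (Suc n)))" unfolding c_def using p1 by (rule ln_ratio)
    ultimately show ?thesis by (simp add: algebra_simps)
  qed
  then have "(\<lambda>n. a (Suc n) - a n) \<longlonglongrightarrow> 0" using lim by simp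
  then have "(\<lambda>n. a n / real (Suc n)) \<longlonglongrightarrow> 0" by (rule growth_o)
  then show ?thesis unfolding predual_def a_def by simp
qed

section \<open>Decomposition of the free energy\<close>

lemma X0p_comp_le_Ntot:
  assumes "z \<in> X0p" shows "z l \<le> Ntot z"
proof -
  have "sum z {l} \<le> suminf z"
    by (rule sum_le_suminf) (use X0pD[OF assms] X0p_summable[OF assms] in auto)
  then show ?thesis by (simp add: Ntot_def)
qed

lemma Ntot_Suc: assumes "z \<in> X0p" shows "Ntot z = (\<Sum>l. z (Suc l))"
  unfolding Ntot_def using suminf_split_head[OF X0p_summable[OF assms]] X0pD(1)[OF assms] by simp

lemma rho_Suc: assumes "z \<in> X0p" shows "rho z = (\<Sum>l. real (Suc l) * z (Suc l))"
  unfolding rho_def using suminf_split_head[OF X0pD(3)[OF assms]] by simp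

lemma summable_Suc_X0p: assumes "z \<in> X0p" shows "summable (\<lambda>l. real (Suc l) * z (Suc l))"
  using X0pD(3)[OF assms] summable_Suc_iff[of "\<lambda>l. real l * z l"] by simp

lemma summable_inv_sq: "summable (\<lambda>n. 2 / real (Suc n) ^ 2)"
proof -
  have "summable (\<lambda>n. inverse (real n ^ 2))" by (rule inverse_power_summable) simp
  then have "summable (\<lambda>n. inverse (real (Suc n) ^ 2))"
    using summable_Suc_iff[of "\<lambda>n. inverse (real n ^ 2)"] by simp
  then have "summable (\<lambda>n. 2 * inverse (real (Suc n) ^ 2))" by (rule summable_mult)
  then show ?thesis by (simp add: divide_inverse)
qed

lemma ent_term_bound:
  assumes z: "z \<in> X0p" and m: "m \<ge> 1" and mr: "real m \<ge> rho z"
  shows "\<bar>xlnx (z m)\<bar> \<le> 4 * z m * ln (real m) + 2 / real m ^ 2" "z m \<le> 1"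
proof -
  have zm0: "z m \<ge> 0" using X0pD(2)[OF z] by simp
  have "real m * z m \<le> rho z" by (rule X0p_term_le_rho[OF z])
  then have "real m * z m \<le> real m * 1" using mr by simp
  then show z1: "z m \<le> 1" using m by (simp add: mult_le_cancel_left_pos)
  have "xlnx (z m) \<le> 0" by (rule xlnx_nonpos[OF zm0 z1])
  then have "\<bar>xlnx (z m)\<bar> = - xlnx (z m)" by simp
  also have "\<dots> \<le> 4 * z m * ln (real m) + 2 / real m ^ 2"
    by (rule negxlnx_bound[OF zm0 z1]) (use m in simp)
  finally show "\<bar>xlnx (z m)\<bar> \<le> 4 * z m * ln (real m) + 2 / real m ^ 2" .
qed

lemma ent_summable:
  assumes z: "z \<in> X0p" shows "summable (\<lambda>l. xlnx (z (Suc l)))"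
proof -
  have s: "summable (\<lambda>l. 4 * (real (Suc l) * z (Suc l)) + 2 / real (Suc l) ^ 2)"
    by (intro summable_add summable_mult summable_Suc_X0p[OF z] summable_inv_sq)
  show ?thesis
  proof (rule summable_comparison_test'[OF s, of "nat \<lceil>rho z\<rceil>"])
    fix n assume n: "n \<ge> nat \<lceil>rho z\<rceil>"
    have mr: "real (Suc n) \<ge> rho z" using n by linarith
    have b: "\<bar>xlnx (z (Suc n))\<bar> \<le> 4 * z (Suc n) * ln (real (Suc n)) + 2 / real (Suc n) ^ 2"
      using ent_term_bound(1)[OF z _ mr] by simp
    have "ln (real (Suc n)) \<le> real (Suc n)"
      using ln_le_minus_one[of "real (Suc n)"] by simp
    then have "4 * z (Suc n) * ln (real (Suc n)) \<le> 4 * (real (Suc n) * z (Suc n))"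
      using X0pD(2)[OF z, of "Suc n"] by (simp add: mult_left_mono mult.commute)
    then show "norm (xlnx (z (Suc n))) \<le> 4 * (real (Suc n) * z (Suc n)) + 2 / real (Suc n) ^ 2"
      using b by simp
  qed
qed

lemma lnqq_summable:
  assumes z: "z \<in> X0p" and qq: "\<forall>l\<ge>1. \<bar>ln (qq l)\<bar> \<le> B * real l"
  shows "summable (\<lambda>l. z (Suc l) * ln (qq (Suc l)))"
proof -
  have s: "summable (\<lambda>l. B * (real (Suc l) * z (Suc l)))"
    by (intro summable_mult summable_Suc_X0p[OF z])
  show ?thesis
  proof (rule summable_comparison_test'[OF s, of 0])
    fix n
    have "\<bar>ln (qq (Suc n))\<bar> \<le> B * real (Suc n)" using qq[rule_format, of "Suc n"] by simp
    then have "\<bar>ln (qq (Suc n))\<bar> * z (Suc n) \<le> B * real (Suc n) * z (Suc n)"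
      using X0pD(2)[OF z, of "Suc n"] by (rule mult_right_mono)
    then show "norm (z (Suc n) * ln (qq (Suc n))) \<le> B * (real (Suc n) * z (Suc n))"
      using X0pD(2)[OF z, of "Suc n"] by (simp add: abs_mult mult.commute mult.left_commute)
  qed
qed

lemma Afun_decomp:
  assumes z: "z \<in> X0p" and qpos: "\<forall>l\<ge>1. qq l > 0" and qq: "\<forall>l\<ge>1. \<bar>ln (qq l)\<bar> \<le> B * real l"
  shows "Afun qq z = (\<Sum>l. xlnx (z (Suc l))) - (\<Sum>l. z (Suc l) * ln (qq (Suc l))) - xlnx (Ntot z)"
proof -
  let ?N = "Ntot z"
  have trm: "z (Suc l) * ln (z (Suc l) / (qq (Suc l) * ?N)) =
      xlnx (z (Suc l)) - z (Suc l) * ln (qq (Suc l)) - z (Suc l) * ln ?N" for l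
  proof (cases "z (Suc l) = 0")
    case True then show ?thesis by simp
  next
    case False
    then have zp: "z (Suc l) > 0" using X0pD(2)[OF z, of "Suc l"] by simp
    have Np: "?N > 0" using X0p_comp_le_Ntot[OF z, of "Suc l"] zp by simp
    have qp: "qq (Suc l) > 0" using qpos by simp
    have "ln (z (Suc l) / (qq (Suc l) * ?N)) = ln (z (Suc l)) - ln (qq (Suc l) * ?N)"
      by (rule ln_divide_pos) (use zp Np qp in auto)
    also have "ln (qq (Suc l) * ?N) = ln (qq (Suc l)) + ln ?N"
      by (rule ln_mult_pos) (use Np qp in auto)
    finally have eq: "ln (z (Suc l) / (qq (Suc l) * ?N)) = ln (z (Suc l)) - ln (qq (Suc l)) - ln ?N"
      by simp
    show ?thesis unfolding xlnx_def eq by (simp add: algebra_simps)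
  qed
  have s1: "summable (\<lambda>l. xlnx (z (Suc l)))" by (rule ent_summable[OF z])
  have s2: "summable (\<lambda>l. z (Suc l) * ln (qq (Suc l)))" by (rule lnqq_summable[OF z qq])
  have s3: "summable (\<lambda>l. z (Suc l))" using X0p_summable[OF z] summable_Suc_iff[of z] by simp
  have s3': "summable (\<lambda>l. z (Suc l) * ln ?N)" using summable_mult2[OF s3] by simp
  have "Afun qq z = (\<Sum>l. xlnx (z (Suc l)) - z (Suc l) * ln (qq (Suc l)) - z (Suc l) * ln ?N)"
    unfolding Afun_def using trm by simp
  also have "\<dots> = (\<Sum>l. xlnx (z (Suc l)) - z (Suc l) * ln (qq (Suc l))) - (\<Sum>l. z (Suc l) * ln ?N)"
    by (rule suminf_diff[OF summable_diff[OF s1 s2] s3', symmetric])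
  also have "(\<Sum>l. xlnx (z (Suc l)) - z (Suc l) * ln (qq (Suc l))) = (\<Sum>l. xlnx (z (Suc l))) - (\<Sum>l. z (Suc l) * ln (qq (Suc l)))"
    by (rule suminf_diff[OF s1 s2, symmetric])
  also have "(\<Sum>l. z (Suc l) * ln ?N) = (\<Sum>l. z (Suc l)) * ln ?N" by (rule suminf_mult2[OF s3, symmetric])
  also have "(\<Sum>l. z (Suc l)) = ?N" using Ntot_Suc[OF z] by simp
  finally show ?thesis unfolding xlnx_def by simp
qed


lemma rho_tail:
  assumes z: "z \<in> X0p"
  shows "summable (\<lambda>n. real (Suc (n + L)) * z (Suc (n + L)))"
    "(\<Sum>n. real (Suc (n + L)) * z (Suc (n + L))) \<le> rho z"
proof -
  have s: "summable (\<lambda>n. real (Suc n) * z (Suc n))" by (rule summable_Suc_X0p[OF z])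
  show s': "summable (\<lambda>n. real (Suc (n + L)) * z (Suc (n + L)))"
    using s summable_iff_shift[of "\<lambda>n. real (Suc n) * z (Suc n)" L] by simp
  have "rho z = (\<Sum>n. real (Suc (n + L)) * z (Suc (n + L))) + (\<Sum>n<L. real (Suc n) * z (Suc n))"
    using rho_Suc[OF z] suminf_split_initial_segment[OF s, of L] by simp
  moreover have "(\<Sum>n<L. real (Suc n) * z (Suc n)) \<ge> 0"
    by (intro sum_nonneg mult_nonneg_nonneg) (use X0pD(2)[OF z] in auto)
  ultimately show "(\<Sum>n. real (Suc (n + L)) * z (Suc (n + L))) \<le> rho z" by linarith
qed

lemma ent_tail:
  assumes e: "e > 0" and M: "M \<ge> 0"
  shows "\<exists>L. \<forall>z\<in>Bset M. \<bar>(\<Sum>l. xlnx (z (Suc l))) - (\<Sum>l<L. xlnx (z (Suc l)))\<bar> \<le> e"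
proof -
  define d where "d = e / (8 * (M + 1))"
  have d: "d > 0" using e M by (simp add: d_def)
  have "(\<lambda>m. ln (real m) / real m) \<longlonglongrightarrow> 0"
    using filterlim_compose[OF ln_x_over_x_tendsto_0 filterlim_real_sequentially] by simp
  then obtain L1 where L1: "\<forall>m\<ge>L1. norm (ln (real m) / real m - 0) < d"
    using LIMSEQ_D[OF _ d] by blast
  have e2: "e / 2 > 0" using e by simp
  obtain L2 where L2: "\<forall>L\<ge>L2. norm (\<Sum>i. 2 / real (Suc (i + L)) ^ 2) < e / 2"
    using suminf_exist_split[OF e2 summable_inv_sq] by auto
  define L where "L = max (max L1 L2) (nat \<lceil>M\<rceil>)"
  show ?thesis
  proof (intro exI ballI)
    fix z assume "z \<in> Bset M"
    then have z: "z \<in> X0p" "rho z \<le> M" by (auto simp: Bset_def)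
    have s: "summable (\<lambda>l. xlnx (z (Suc l)))" by (rule ent_summable[OF z(1)])
    have eq: "(\<Sum>l. xlnx (z (Suc l))) - (\<Sum>l<L. xlnx (z (Suc l))) = (\<Sum>n. xlnx (z (Suc (n + L))))"
      using suminf_split_initial_segment[OF s, of L] by simp
    have bnd: "norm (xlnx (z (Suc (n + L)))) \<le> 4 * d * (real (Suc (n + L)) * z (Suc (n + L))) + 2 / real (Suc (n + L)) ^ 2" for n
    proof -
      define m where "m = Suc (n + L)"
      have mL: "m \<ge> L" "m \<ge> 1" by (auto simp: m_def)
      have "real m \<ge> M" using mL(1) unfolding L_def by linarith
      then have mr: "real m \<ge> rho z" using z(2) by simp
      have b: "\<bar>xlnx (z m)\<bar> \<le> 4 * z m * ln (real m) + 2 / real m ^ 2"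
        by (rule ent_term_bound(1)[OF z(1) mL(2) mr])
      have "m \<ge> L1" using mL(1) unfolding L_def by simp
      then have "norm (ln (real m) / real m - 0) < d" using L1 by blast
      then have "\<bar>ln (real m) / real m\<bar> < d" by (simp only: real_norm_def diff_0_right)
      then have "ln (real m) / real m < d" by (rule le_less_trans[OF abs_ge_self])
      then have "ln (real m) < d * real m" using mL(2) by (simp add: divide_less_eq)
      then have "4 * z m * ln (real m) \<le> 4 * z m * (d * real m)"
        using X0pD(2)[OF z(1), of m] by (intro mult_left_mono) auto
      also have "\<dots> = 4 * d * (real m * z m)" by (simp add: mult_ac)
      finally show ?thesis using b unfolding m_def by simp
    qed
    have st: "summable (\<lambda>n. real (Suc (n + L)) * z (Suc (n + L)))" by (rule rho_tail(1)[OF z(1)])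
    have sq: "summable (\<lambda>n. 2 / real (Suc (n + L)) ^ 2)"
      using summable_inv_sq summable_iff_shift[of "\<lambda>n. 2 / real (Suc n) ^ 2" L] by simp
    have sb: "summable (\<lambda>n. 4 * d * (real (Suc (n + L)) * z (Suc (n + L))) + 2 / real (Suc (n + L)) ^ 2)"
      by (intro summable_add summable_mult st sq)
    have "norm (\<Sum>n. xlnx (z (Suc (n + L)))) \<le> (\<Sum>n. 4 * d * (real (Suc (n + L)) * z (Suc (n + L))) + 2 / real (Suc (n + L)) ^ 2)"
      by (rule norm_suminf_le[OF bnd sb])
    also have "\<dots> = 4 * d * (\<Sum>n. real (Suc (n + L)) * z (Suc (n + L))) + (\<Sum>n. 2 / real (Suc (n + L)) ^ 2)"
      using suminf_add[OF summable_mult[OF st] sq, symmetric] suminf_mult[OF st] by simp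
    also have "4 * d * (\<Sum>n. real (Suc (n + L)) * z (Suc (n + L))) \<le> 4 * d * M"
      using rho_tail(2)[OF z(1), of L] z(2) d by (intro mult_left_mono) auto
    also have "(\<Sum>n. 2 / real (Suc (n + L)) ^ 2) < e / 2"
    proof -
      have "L \<ge> L2" unfolding L_def by simp
      then have "norm (\<Sum>i. 2 / real (Suc (i + L)) ^ 2) < e / 2" using L2 by blast
      then show ?thesis by simp
    qed
    also have "4 * d * M = e / 2 * (M / (M + 1))" unfolding d_def using M by (simp add: field_simps)
    also have "e / 2 * (M / (M + 1)) \<le> e / 2 * 1" using e M by (intro mult_left_mono) auto
    finally have "norm (\<Sum>n. xlnx (z (Suc (n + L)))) < e" by simp
    then show "\<bar>(\<Sum>l. xlnx (z (Suc l))) - (\<Sum>l<L. xlnx (z (Suc l)))\<bar> \<le> e" using eq by simp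
  qed
qed

lemma qt_facts:
  assumes q_pos: "\<forall>l\<ge>1. q l > 0" and q1: "q 1 = 1"
    and R_lim: "(\<lambda>l. q (Suc l) / q (Suc (Suc l))) \<longlonglongrightarrow> R" and R_pos: "0 < R"
  obtains Bq where "Bq \<ge> 0" "\<forall>l\<ge>1. \<bar>ln (q l)\<bar> \<le> Bq * real l"
    "\<forall>l\<ge>1. q l * R ^ l > 0" "\<forall>l\<ge>1. \<bar>ln (q l * R ^ l)\<bar> \<le> (Bq + \<bar>ln R\<bar>) * real l"
    "\<And>l. l \<ge> 1 \<Longrightarrow> ln (q l * R ^ l) = ln (q l) + real l * ln R"
proof -
  obtain Bq where Bq: "Bq \<ge> 0" "\<forall>l\<ge>1. \<bar>ln (q l)\<bar> \<le> Bq * real l"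
    using lnq_lin[OF q_pos q1 R_lim R_pos] by blast
  have lneq: "ln (q l * R ^ l) = ln (q l) + real l * ln R" if "l \<ge> 1" for l
  proof -
    have "q l > 0" using q_pos that by simp
    then have "ln (q l * R ^ l) = ln (q l) + ln (R ^ l)" using R_pos by (simp add: ln_mult_pos)
    then show ?thesis by (simp add: ln_realpow)
  qed
  have "\<forall>l\<ge>1. q l * R ^ l > 0" using q_pos R_pos by simp
  moreover have "\<forall>l\<ge>1. \<bar>ln (q l * R ^ l)\<bar> \<le> (Bq + \<bar>ln R\<bar>) * real l"
  proof (intro allI impI)
    fix l :: nat assume l: "l \<ge> 1"
    have "\<bar>ln (q l * R ^ l)\<bar> \<le> \<bar>ln (q l)\<bar> + \<bar>real l * ln R\<bar>" using lneq[OF l] by simp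
    also have "\<bar>real l * ln R\<bar> = real l * \<bar>ln R\<bar>" by (simp add: abs_mult)
    finally have a: "\<bar>ln (q l * R ^ l)\<bar> \<le> \<bar>ln (q l)\<bar> + real l * \<bar>ln R\<bar>" .
    have b: "\<bar>ln (q l)\<bar> \<le> Bq * real l" using Bq(2) l by simp
    have c: "(Bq + \<bar>ln R\<bar>) * real l = Bq * real l + real l * \<bar>ln R\<bar>" by (simp add: algebra_simps)
    show "\<bar>ln (q l * R ^ l)\<bar> \<le> (Bq + \<bar>ln R\<bar>) * real l" using a b c by linarith
  qed
  ultimately show ?thesis using that Bq lneq by blast
qed

lemma Atil_eq:
  assumes q_pos: "\<forall>l\<ge>1. q l > 0" and q1: "q 1 = 1"
    and R_lim: "(\<lambda>l. q (Suc l) / q (Suc (Suc l))) \<longlonglongrightarrow> R" and R_pos: "0 < R"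
    and z: "z \<in> X0p"
  shows "Atil q R z = Afun q z - ln R * rho z"
proof -
  obtain Bq where Bq: "Bq \<ge> 0" "\<forall>l\<ge>1. \<bar>ln (q l)\<bar> \<le> Bq * real l"
    "\<forall>l\<ge>1. q l * R ^ l > 0" "\<forall>l\<ge>1. \<bar>ln (q l * R ^ l)\<bar> \<le> (Bq + \<bar>ln R\<bar>) * real l"
    "\<And>l. l \<ge> 1 \<Longrightarrow> ln (q l * R ^ l) = ln (q l) + real l * ln R"
    using qt_facts[OF q_pos q1 R_lim R_pos] by blast
  have d1: "Atil q R z = (\<Sum>l. xlnx (z (Suc l))) - (\<Sum>l. z (Suc l) * ln (q (Suc l) * R ^ Suc l)) - xlnx (Ntot z)"
    unfolding Atil_def using Afun_decomp[OF z Bq(3) Bq(4)] by simp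
  have d2: "Afun q z = (\<Sum>l. xlnx (z (Suc l))) - (\<Sum>l. z (Suc l) * ln (q (Suc l))) - xlnx (Ntot z)"
    using Afun_decomp[OF z q_pos Bq(2)] .
  have s1: "summable (\<lambda>l. z (Suc l) * ln (q (Suc l)))" by (rule lnqq_summable[OF z Bq(2)])
  have s2: "summable (\<lambda>l. ln R * (real (Suc l) * z (Suc l)))" by (intro summable_mult summable_Suc_X0p[OF z])
  have e5: "z (Suc l) * ln (q (Suc l) * R ^ Suc l) = z (Suc l) * ln (q (Suc l)) + ln R * (real (Suc l) * z (Suc l))" for l
  proof -
    have "ln (q (Suc l) * R ^ Suc l) = ln (q (Suc l)) + real (Suc l) * ln R" by (rule Bq(5)) simp
    then show ?thesis unfolding \<open>ln (q (Suc l) * R ^ Suc l) = ln (q (Suc l)) + real (Suc l) * ln R\<close>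
      by (simp add: algebra_simps)
  qed
  have "(\<Sum>l. z (Suc l) * ln (q (Suc l) * R ^ Suc l)) = (\<Sum>l. z (Suc l) * ln (q (Suc l)) + ln R * (real (Suc l) * z (Suc l)))"
    using e5 by simp
  also have "\<dots> = (\<Sum>l. z (Suc l) * ln (q (Suc l))) + (\<Sum>l. ln R * (real (Suc l) * z (Suc l)))"
    by (rule suminf_add[OF s1 s2, symmetric])
  also have "(\<Sum>l. ln R * (real (Suc l) * z (Suc l))) = ln R * rho z"
    using suminf_mult[OF summable_Suc_X0p[OF z], of "ln R"] rho_Suc[OF z] by simp
  finally show ?thesis using d1 d2 by simp
qed

lemma Atil_cont:
  assumes q_pos: "\<forall>l\<ge>1. q l > 0" and q1: "q 1 = 1"
    and R_lim: "(\<lambda>l. q (Suc l) / q (Suc (Suc l))) \<longlonglongrightarrow> R" and R_pos: "0 < R"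
    and w: "\<And>k. w k \<in> Bset M" and v: "v \<in> Bset M" and c: "\<And>l. (\<lambda>k. w k l) \<longlonglongrightarrow> v l"
  shows "(\<lambda>k. Atil q R (w k)) \<longlonglongrightarrow> Atil q R v"
proof -
  obtain Bq where Bq: "Bq \<ge> 0" "\<forall>l\<ge>1. \<bar>ln (q l)\<bar> \<le> Bq * real l"
    "\<forall>l\<ge>1. q l * R ^ l > 0" "\<forall>l\<ge>1. \<bar>ln (q l * R ^ l)\<bar> \<le> (Bq + \<bar>ln R\<bar>) * real l"
    "\<And>l. l \<ge> 1 \<Longrightarrow> ln (q l * R ^ l) = ln (q l) + real l * ln R"
    using qt_facts[OF q_pos q1 R_lim R_pos] by blast
  define fq where "fq = (\<lambda>l. ln (q l * R ^ l))"
  have fq: "fq \<in> predual" unfolding fq_def by (rule lnqt_predual[OF q_pos R_lim R_pos])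
  have dec: "Atil q R z = (\<Sum>l. xlnx (z (Suc l))) - pairing fq z - xlnx (Ntot z)" if "z \<in> X0p" for z
  proof -
    have "Atil q R z = (\<Sum>l. xlnx (z (Suc l))) - (\<Sum>l. z (Suc l) * ln (q (Suc l) * R ^ Suc l)) - xlnx (Ntot z)"
      unfolding Atil_def using Afun_decomp[OF that Bq(3) Bq(4)] by simp
    moreover have "(\<Sum>l. z (Suc l) * ln (q (Suc l) * R ^ Suc l)) = pairing fq z"
      unfolding pairing_def fq_def by (simp add: mult.commute)
    ultimately show ?thesis by simp
  qed
  have wX: "w k \<in> X0p" "rho (w k) \<le> M" for k using w[of k] by (auto simp: Bset_def)
  have vX: "v \<in> X0p" "rho v \<le> M" using v by (auto simp: Bset_def)
  have M: "M \<ge> 0" using X0p_rho_nonneg[OF vX(1)] vX(2) by linarith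
  have t1: "(\<lambda>k. \<Sum>l. xlnx (w k (Suc l))) \<longlonglongrightarrow> (\<Sum>l. xlnx (v (Suc l)))"
  proof (rule approx_tendsto[where K = "Bset M" and FL = "\<lambda>L z. \<Sum>l<L. xlnx (z (Suc l))"
        and F = "\<lambda>z. \<Sum>l. xlnx (z (Suc l))" and w = w and v = v])
    show "\<exists>L. \<forall>x\<in>Bset M. \<bar>(\<Sum>l. xlnx (x (Suc l))) - (\<Sum>l<L. xlnx (x (Suc l)))\<bar> \<le> e" if "e > 0" for e
      by (rule ent_tail[OF that M])
    show "(\<lambda>k. \<Sum>l<L. xlnx (w k (Suc l))) \<longlonglongrightarrow> (\<Sum>l<L. xlnx (v (Suc l)))" for L
      by (intro tendsto_sum tendsto_xlnx c always_eventually allI) (use X0pD(2) wX(1) vX(1) in auto)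
  qed (use w v in auto)
  have t2: "(\<lambda>k. pairing fq (w k)) \<longlonglongrightarrow> pairing fq v"
    by (rule pairing_conv[OF fq wX vX c])
  have t3: "(\<lambda>k. xlnx (Ntot (w k))) \<longlonglongrightarrow> xlnx (Ntot v)"
    by (intro tendsto_xlnx Ntot_conv[OF wX vX c] always_eventually allI X0p_Ntot_nonneg wX(1) vX(1))
  have "(\<lambda>k. (\<Sum>l. xlnx (w k (Suc l))) - pairing fq (w k) - xlnx (Ntot (w k)))
      \<longlonglongrightarrow> (\<Sum>l. xlnx (v (Suc l))) - pairing fq v - xlnx (Ntot v)"
    by (intro tendsto_diff t1 t2 t3)
  then show ?thesis using dec wX(1) dec[OF vX(1)] by simp
qed


lemma tele_sum:
  fixes c J :: "nat \<Rightarrow> real"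
  assumes "n \<ge> 2"
  shows "(\<Sum>l\<in>{2..<n}. c l * (J (l - 1) - J l)) = (\<Sum>k\<in>{1..<n}. (c (Suc k) - c k) * J k) - c n * J (n - 1) + c 1 * J 1"
  using assms
proof (induction n rule: nat_induct_at_least)
  case base
  then show ?case by (simp add: numeral_2_eq_2 algebra_simps)
next
  case (Suc n)
  have "(\<Sum>l\<in>{2..<Suc n}. c l * (J (l - 1) - J l)) = (\<Sum>l\<in>{2..<n}. c l * (J (l - 1) - J l)) + c n * (J (n - 1) - J n)"
    using Suc.hyps by simp
  also have "\<dots> = (\<Sum>k\<in>{1..<n}. (c (Suc k) - c k) * J k) - c n * J (n - 1) + c 1 * J 1 + c n * (J (n - 1) - J n)"
    using Suc.IH by simp
  also have "(\<Sum>k\<in>{1..<Suc n}. (c (Suc k) - c k) * J k) = (\<Sum>k\<in>{1..<n}. (c (Suc k) - c k) * J k) + (c (Suc n) - c n) * J n"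
    using Suc.hyps by simp
  ultimately show ?case by (simp add: algebra_simps)
qed

definition dFf :: "nat \<Rightarrow> (nat \<Rightarrow> real) \<Rightarrow> nat \<Rightarrow> real" where
  "dFf m J l = (if l = 1 then - J 1 - (\<Sum>k\<in>{1..<m}. J k) else if l = m then J (m - 1) else J (l - 1) - J l)"

lemma wsum_id:
  fixes c J :: "nat \<Rightarrow> real"
  assumes m: "m \<ge> 2"
  shows "(\<Sum>l\<in>{1..m}. c l * dFf m J l) = - (\<Sum>k\<in>{1..<m}. J k * (c 1 + c k - c (Suc k)))"
proof -
  have set: "{1..m} = insert 1 (insert m {2..<m})" using m by auto
  have n1: "1 \<notin> insert m {2..<m}" using m by auto
  have n2: "m \<notin> {2..<m}" by auto
  have "(\<Sum>l\<in>{1..m}. c l * dFf m J l) = c 1 * dFf m J 1 + (c m * dFf m J m + (\<Sum>l\<in>{2..<m}. c l * dFf m J l))"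
    unfolding set using n1 n2 by (simp add: sum.insert)
  also have "(\<Sum>l\<in>{2..<m}. c l * dFf m J l) = (\<Sum>l\<in>{2..<m}. c l * (J (l - 1) - J l))"
    by (intro sum.cong) (auto simp: dFf_def)
  also have "\<dots> = (\<Sum>k\<in>{1..<m}. (c (Suc k) - c k) * J k) - c m * J (m - 1) + c 1 * J 1"
    by (rule tele_sum[OF m])
  also have "dFf m J 1 = - J 1 - (\<Sum>k\<in>{1..<m}. J k)" by (simp add: dFf_def)
  also have "dFf m J m = J (m - 1)" using m by (simp add: dFf_def)
  finally have a: "(\<Sum>l\<in>{1..m}. c l * dFf m J l) = - (c 1 * (\<Sum>k\<in>{1..<m}. J k)) + (\<Sum>k\<in>{1..<m}. (c (Suc k) - c k) * J k)"
    by (simp add: algebra_simps)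
  have b: "(\<Sum>k\<in>{1..<m}. J k * (c 1 + c k - c (Suc k))) = c 1 * (\<Sum>k\<in>{1..<m}. J k) - (\<Sum>k\<in>{1..<m}. (c (Suc k) - c k) * J k)"
    by (simp add: sum_distrib_left sum_subtractf[symmetric] algebra_simps)
  show ?thesis using a b by simp
qed

section \<open>The truncated system\<close>

locale trunc =
  fixes gam q y :: "nat \<Rightarrow> real" and m :: nat and u :: "real \<Rightarrow> nat \<Rightarrow> real"
  assumes m2: "m \<ge> 2" and ts: "truncated_solution gam q y m u"
    and gpos: "\<forall>l\<ge>1. gam l > 0" and qpos: "\<forall>l\<ge>1. q l > 0" and q1: "q 1 = 1"
    and yX: "y \<in> X0p" and y1: "y 1 > 0"
begin

definition NN :: "real \<Rightarrow> real" where "NN t = (\<Sum>l\<in>{1..m}. u t l)"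

definition JJ :: "real \<Rightarrow> nat \<Rightarrow> real" where
  "JJ t k = gam k * (u t 1 * u t k - NN t * q k / q (Suc k) * u t (Suc k))"

definition dF :: "real \<Rightarrow> nat \<Rightarrow> real" where "dF t l = dFf m (JJ t) l"

lemma u_zero: "t \<ge> 0 \<Longrightarrow> l = 0 \<or> l > m \<Longrightarrow> u t l = 0"
  using ts unfolding truncated_solution_def by blast

lemma u_init: "1 \<le> l \<Longrightarrow> l \<le> m \<Longrightarrow> u 0 l = y l"
  using ts unfolding truncated_solution_def by blast

lemma Ntot_u: assumes "t \<ge> 0" shows "Ntot (u t) = NN t"
  unfolding Ntot_def NN_def
  by (rule suminf_finite) (use u_zero[OF assms] in \<open>auto simp: not_le\<close>)

lemma Jflux_u: assumes "t \<ge> 0" "k \<ge> 1" shows "Jflux gam q (u t) k = JJ t k"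
  using assms Ntot_u[OF assms(1)] by (simp add: Jflux_def JJ_def)

lemma sum_set: "{1..m - 1} = {1..<m}" using m2 by auto

lemma deriv:
  assumes t: "t \<ge> 0" and l: "1 \<le> l" "l \<le> m"
  shows "((\<lambda>s. u s l) has_real_derivative dF t l) (at t within {0..})"
proof -
  have D: "((\<lambda>s. u s 1) has_real_derivative (- Jflux gam q (u t) 1 - (\<Sum>k=1..m-1. Jflux gam q (u t) k))) (at t within {0..})"
      "\<And>l. 2 \<le> l \<and> l \<le> m - 1 \<Longrightarrow> ((\<lambda>s. u s l) has_real_derivative (Jflux gam q (u t) (l - 1) - Jflux gam q (u t) l)) (at t within {0..})"
      "((\<lambda>s. u s m) has_real_derivative Jflux gam q (u t) (m - 1)) (at t within {0..})"
    using ts t unfolding truncated_solution_def by blast+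
  have s1: "(\<Sum>k=1..m-1. Jflux gam q (u t) k) = (\<Sum>k\<in>{1..<m}. JJ t k)"
    unfolding sum_set by (intro sum.cong) (auto simp: Jflux_u[OF t])
  show ?thesis
  proof (cases "l = 1")
    case True
    then show ?thesis using D(1) s1 Jflux_u[OF t, of 1] by (simp add: dF_def dFf_def)
  next
    case False
    show ?thesis
    proof (cases "l = m")
      case True
      then show ?thesis using D(3) Jflux_u[OF t, of "m - 1"] m2 False by (simp add: dF_def dFf_def)
    next
      case False2: False
      then have "2 \<le> l \<and> l \<le> m - 1" using l False by auto
      moreover have "l - 1 \<ge> 1" using \<open>2 \<le> l \<and> l \<le> m - 1\<close> by linarith
      ultimately show ?thesis using D(2)[of l] Jflux_u[OF t \<open>l - 1 \<ge> 1\<close>] Jflux_u[OF t, of l] False False2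
        by (simp add: dF_def dFf_def)
    qed
  qed
qed

lemma u_cont: "continuous_on {0..} (\<lambda>s. u s l)"
proof (cases "1 \<le> l \<and> l \<le> m")
  case True
  then show ?thesis by (intro DERIV_continuous_on[where D = "\<lambda>t. dF t l"]) (use deriv in auto)
next
  case False
  then have "l = 0 \<or> l > m" by auto
  then have "\<forall>s\<in>{0..}. u s l = 0" using u_zero by auto
  then show ?thesis using continuous_on_cong[of "{0..}" "{0..}" "\<lambda>s. u s l" "\<lambda>_. 0"] by auto
qed

lemma NN_cont: "continuous_on {0..} NN"
  unfolding NN_def by (intro continuous_on_sum u_cont)

lemma mass_deriv: "(\<Sum>l\<in>{1..m}. real l * dF t l) = 0"
  unfolding dF_def using wsum_id[OF m2, of real "JJ t"] by simp

lemma N_deriv: "(\<Sum>l\<in>{1..m}. dF t l) = - (\<Sum>k\<in>{1..<m}. JJ t k)"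
  unfolding dF_def using wsum_id[OF m2, of "\<lambda>_. 1" "JJ t"] by simp

lemma mass_cons: assumes "t \<ge> 0" shows "(\<Sum>l\<in>{1..m}. real l * u t l) = (\<Sum>l\<in>{1..m}. real l * y l)"
proof -
  have D0: "((\<lambda>s. \<Sum>l\<in>{1..m}. real l * u s l) has_field_derivative 0) (at x within {0..})" if "x \<in> {0..}" for x
  proof -
    have "((\<lambda>s. \<Sum>l\<in>{1..m}. real l * u s l) has_field_derivative (\<Sum>l\<in>{1..m}. real l * dF x l)) (at x within {0..})"
      by (intro DERIV_sum DERIV_cmult deriv) (use that in auto)
    then show ?thesis using mass_deriv by simp
  qed
  have cv: "convex {0::real..}" by (rule convex_real_interval)
  obtain c where c: "\<forall>x\<in>{0..}. (\<Sum>l\<in>{1..m}. real l * u x l) = c"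
    using has_field_derivative_zero_constant[OF cv D0] by blast
  have "(\<Sum>l\<in>{1..m}. real l * u t l) = (\<Sum>l\<in>{1..m}. real l * u 0 l)" using c assms by simp
  also have "\<dots> = (\<Sum>l\<in>{1..m}. real l * y l)" by (intro sum.cong) (auto simp: u_init)
  finally show ?thesis .
qed

end


section \<open>Lower bounds for the quasi-positivity argument\<close>

lemma prod_low:
  fixes x y a1 a2 K :: real
  assumes "x \<ge> -a1" "y \<ge> -a2" "\<bar>x\<bar> \<le> K" "\<bar>y\<bar> \<le> K" "a1 \<ge> 0" "a2 \<ge> 0"
  shows "x * y \<ge> -((a1 + a2) * K)"
proof -
  have K: "K \<ge> 0" using assms(3) by linarith
  have e: "(a1 + a2) * K = a1 * K + a2 * K" by (simp add: distrib_right)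
  have k1: "a1 * K \<ge> 0" "a2 * K \<ge> 0" using assms(5,6) K by simp_all
  show ?thesis
  proof (cases "x \<ge> 0")
    case xp: True
    show ?thesis
    proof (cases "y \<ge> 0")
      case True
      then have "x * y \<ge> 0" using xp by simp
      then show ?thesis using e k1 by linarith
    next
      case False
      have "x * y \<ge> x * (-a2)" using assms(2) xp by (intro mult_left_mono) auto
      moreover have "x * a2 \<le> K * a2" using assms(3,6) xp by (intro mult_right_mono) auto
      ultimately have "x * y \<ge> -(a2 * K)" by (simp add: mult.commute)
      then show ?thesis using e k1 by linarith
    qed
  next
    case xn: False
    show ?thesis
    proof (cases "y \<ge> 0")
      case True
      have "x * y \<ge> (-a1) * y" using assms(1) True by (intro mult_right_mono) auto
      moreover have "a1 * y \<le> a1 * K" using assms(4,5) True by (intro mult_left_mono) auto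
      ultimately have "x * y \<ge> -(a1 * K)" by simp
      then show ?thesis using e k1 by linarith
    next
      case False
      then have "x * y \<ge> 0" using xn by (simp add: mult_nonpos_nonpos)
      then show ?thesis using e k1 by linarith
    qed
  qed
qed

lemma J_low:
  fixes g r N a K u1 uk uk1 :: real
  assumes g: "g > 0" and r: "r > 0" and a: "a \<ge> 0" and m: "m \<ge> 0"
    and u1: "u1 \<ge> -a" "\<bar>u1\<bar> \<le> K" and uk: "uk \<ge> -a" "\<bar>uk\<bar> \<le> K" and N: "\<bar>N\<bar> \<le> K"
  shows "g * (u1 * uk - N * r * (-a)) \<ge> -(g * (1 + r) * (m + 2) * K * a)"
proof -
  have K: "K \<ge> 0" using N by linarith
  have p: "u1 * uk \<ge> -((a + a) * K)" by (rule prod_low[OF u1(1) uk(1) u1(2) uk(2) a a])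
  have "N \<ge> -K" using N by linarith
  then have "(r * a) * N \<ge> (r * a) * (-K)" using r a by (intro mult_left_mono) auto
  then have "u1 * uk - N * r * (-a) \<ge> -((2 + r) * K * a)" using p by (simp add: algebra_simps)
  moreover have "(2 + r) * (K * a) \<le> ((1 + r) * (m + 2)) * (K * a)"
    using K a r m by (intro mult_right_mono) (auto simp: algebra_simps)
  ultimately have "u1 * uk - N * r * (-a) \<ge> -((1 + r) * (m + 2) * K * a)" by (simp add: mult_ac)
  then have "g * (u1 * uk - N * r * (-a)) \<ge> g * (-((1 + r) * (m + 2) * K * a))"
    using g by (intro mult_left_mono) auto
  then show ?thesis by (simp add: mult_ac)
qed

lemma negJ_low:
  fixes g r N a K u1 uk uk1 m :: real
  assumes g: "g > 0" and r: "r > 0" and a: "a \<ge> 0" and m: "m \<ge> 0"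
    and eq: "u1 = -a \<or> uk = -a" and u1: "\<bar>u1\<bar> \<le> K" and uk: "\<bar>uk\<bar> \<le> K"
    and uk1: "uk1 \<ge> -a" "\<bar>uk1\<bar> \<le> K" and N: "N \<ge> -(m * a)" "\<bar>N\<bar> \<le> K"
  shows "- (g * (u1 * uk - N * r * uk1)) \<ge> -(g * (1 + r) * (m + 2) * K * a)"
proof -
  have K: "K \<ge> 0" using u1 by linarith
  have p: "N * uk1 \<ge> -((m * a + a) * K)" by (rule prod_low[OF N(1) uk1(1) N(2) uk1(2)]) (use a m in auto)
  have q: "- (u1 * uk) \<ge> -(a * K)"
  proof (cases "u1 = -a")
    case True
    have "a * uk \<ge> a * (-K)" using uk a by (intro mult_left_mono) auto
    then show ?thesis using True by simp
  next
    case False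
    then have "uk = -a" using eq by simp
    have "a * u1 \<ge> a * (-K)" using u1 a by (intro mult_left_mono) auto
    then show ?thesis using \<open>uk = -a\<close> by (simp add: mult.commute)
  qed
  have "r * (N * uk1) \<ge> r * (-((m * a + a) * K))" using p r by (intro mult_left_mono) auto
  then have "- (u1 * uk - N * r * uk1) \<ge> -((1 + r * (m + 1)) * K * a)"
    using q by (simp add: algebra_simps)
  moreover have "(1 + r * (m + 1)) * (K * a) \<le> ((1 + r) * (m + 2)) * (K * a)"
    using K a r m by (intro mult_right_mono) (auto simp: algebra_simps)
  ultimately have "- (u1 * uk - N * r * uk1) \<ge> -((1 + r) * (m + 2) * K * a)" by (simp add: mult_ac)
  then have "g * (- (u1 * uk - N * r * uk1)) \<ge> g * (-((1 + r) * (m + 2) * K * a))"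
    using g by (intro mult_left_mono) auto
  then show ?thesis by (simp only: mult_minus_right mult.assoc)
qed


definition Wc :: "(nat \<Rightarrow> real) \<Rightarrow> (nat \<Rightarrow> real) \<Rightarrow> nat \<Rightarrow> real \<Rightarrow> real" where
  "Wc gam q m K = (\<Sum>k\<in>{1..<m}. gam k * (1 + q k / q (Suc k)) * (real m + 2) * K)"

lemma dF_lower:
  fixes u :: "nat \<Rightarrow> real"
  assumes m: "m \<ge> 2" and gp: "\<forall>k\<ge>1. gam k > 0" and qp: "\<forall>k\<ge>1. q k > 0"
    and a: "a \<ge> 0" and ub: "\<And>j. j \<in> {1..m} \<Longrightarrow> \<bar>u j\<bar> \<le> K" and ua: "\<And>j. j \<in> {1..m} \<Longrightarrow> u j \<ge> -a"
    and Nb: "\<bar>N\<bar> \<le> K" "N \<ge> -(real m * a)"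
    and l: "l \<in> {1..m}" "u l = -a"
  shows "dFf m (\<lambda>k. gam k * (u 1 * u k - N * q k / q (Suc k) * u (Suc k))) l \<ge> -(2 * Wc gam q m K * a)"
proof -
  define J where "J k = gam k * (u 1 * u k - N * q k / q (Suc k) * u (Suc k))" for k
  define w where "w k = gam k * (1 + q k / q (Suc k)) * (real m + 2) * K" for k
  have K: "K \<ge> 0" using ub[of 1] m by force
  have Jr: "J k = gam k * (u 1 * u k - N * (q k / q (Suc k)) * u (Suc k))" for k
    unfolding J_def by simp
  have gk: "gam k > 0" and rk: "q k / q (Suc k) > 0" if "k \<ge> 1" for k
    using gp qp that by auto
  have wnn: "w k \<ge> 0" if "k \<ge> 1" for k unfolding w_def using gk[OF that] rk[OF that] K by simp
  have W: "Wc gam q m K = (\<Sum>k\<in>{1..<m}. w k)" unfolding Wc_def w_def by simp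
  have wW: "w k \<le> Wc gam q m K" if "k \<in> {1..<m}" for k
    unfolding W by (rule member_le_sum) (use that wnn in auto)
  have W0: "Wc gam q m K \<ge> 0" unfolding W by (intro sum_nonneg) (use wnn in auto)
  have mm: "real m \<ge> 0" by simp
  have Jlow: "J k \<ge> -(w k * a)" if k: "k \<in> {1..<m}" and e: "u (Suc k) = -a" for k
  proof -
    have "gam k * (u 1 * u k - N * (q k / q (Suc k)) * (-a)) \<ge> -(gam k * (1 + q k / q (Suc k)) * (real m + 2) * K * a)"
      by (rule J_low[OF gk rk a mm ua ub ua ub Nb(1)]) (use k m in auto)
    then show ?thesis unfolding Jr w_def using e by simp
  qed
  have nJlow: "- J k \<ge> -(w k * a)" if k: "k \<in> {1..<m}" and e: "u 1 = -a \<or> u k = -a" for k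
  proof -
    have "- (gam k * (u 1 * u k - N * (q k / q (Suc k)) * u (Suc k))) \<ge> -(gam k * (1 + q k / q (Suc k)) * (real m + 2) * K * a)"
      by (rule negJ_low[OF gk rk a mm e ub ub ua ub Nb(2) Nb(1)]) (use k m in auto)
    then show ?thesis unfolding Jr w_def by simp
  qed
  have Wa: "Wc gam q m K * a \<ge> 0" using W0 a by simp
  have "dFf m J l \<ge> -(2 * Wc gam q m K * a)"
  proof (cases "l = 1")
    case True
    have one: "1 \<in> {1..<m}" using m by simp
    have "(\<Sum>k\<in>{1..<m}. - J k) \<ge> (\<Sum>k\<in>{1..<m}. -(w k * a))"
      by (intro sum_mono nJlow) (use True l in auto)
    also have "(\<Sum>k\<in>{1..<m}. -(w k * a)) = -(Wc gam q m K * a)"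
      unfolding W by (simp add: sum_negf sum_distrib_right)
    finally have s: "(\<Sum>k\<in>{1..<m}. - J k) \<ge> -(Wc gam q m K * a)" .
    have j1: "- J 1 \<ge> -(w 1 * a)" by (rule nJlow[OF one]) (use True l in auto)
    have "w 1 * a \<le> Wc gam q m K * a" using wW[OF one] a by (intro mult_right_mono) auto
    moreover have "dFf m J l = - J 1 + (\<Sum>k\<in>{1..<m}. - J k)" using True by (simp add: dFf_def sum_negf)
    ultimately show ?thesis using s j1 by linarith
  next
    case False
    show ?thesis
    proof (cases "l = m")
      case True
      have k: "m - 1 \<in> {1..<m}" using m by auto
      have "J (m - 1) \<ge> -(w (m - 1) * a)" by (rule Jlow[OF k]) (use True l m in auto)
      moreover have "w (m - 1) * a \<le> Wc gam q m K * a" using wW[OF k] a by (intro mult_right_mono) auto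
      moreover have "dFf m J l = J (m - 1)" using True m by (simp add: dFf_def)
      ultimately show ?thesis using Wa by linarith
    next
      case False2: False
      have k1: "l - 1 \<in> {1..<m}" and k2: "l \<in> {1..<m}" using l False False2 by auto
      have "J (l - 1) \<ge> -(w (l - 1) * a)" by (rule Jlow[OF k1]) (use l False in auto)
      moreover have "- J l \<ge> -(w l * a)" by (rule nJlow[OF k2]) (use l in auto)
      moreover have "w (l - 1) * a \<le> Wc gam q m K * a" using wW[OF k1] a by (intro mult_right_mono) auto
      moreover have "w l * a \<le> Wc gam q m K * a" using wW[OF k2] a by (intro mult_right_mono) auto
      moreover have "dFf m J l = J (l - 1) - J l" using False False2 by (simp add: dFf_def)
      ultimately show ?thesis by linarith
    qed
  qed
  then show ?thesis unfolding J_def .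
qed

context trunc
begin

lemma deriv_at:
  assumes t: "t > 0" and l: "1 \<le> l" "l \<le> m"
  shows "((\<lambda>s. u s l) has_real_derivative dF t l) (at t)"
proof -
  have "((\<lambda>s. u s l) has_real_derivative dF t l) (at t within {0..t+1})"
    by (rule has_field_derivative_subset[OF deriv]) (use t l in auto)
  moreover have "at t within {0..t+1} = at t" by (rule at_within_Icc_at) (use t in auto)
  ultimately show ?thesis by simp
qed

lemma bound_on:
  assumes T: "T \<ge> 0"
  obtains K where "K > 0" "\<And>s j. s \<in> {0..T} \<Longrightarrow> j \<in> {1..m} \<Longrightarrow> \<bar>u s j\<bar> \<le> K"
    "\<And>s. s \<in> {0..T} \<Longrightarrow> \<bar>NN s\<bar> \<le> K"
proof -
  define f where "f s = (\<Sum>j\<in>{1..m}. \<bar>u s j\<bar>)" for s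
  have "continuous_on {0..T} f" unfolding f_def
    by (intro continuous_on_sum continuous_intros continuous_on_subset[OF u_cont]) auto
  then obtain x where x: "x \<in> {0..T}" "\<And>y. y \<in> {0..T} \<Longrightarrow> f y \<le> f x"
    using continuous_attains_sup[of "{0..T}" f] T by auto
  have a: "\<bar>u s j\<bar> \<le> f x + 1" if "s \<in> {0..T}" "j \<in> {1..m}" for s j
  proof -
    have "\<bar>u s j\<bar> \<le> f s" unfolding f_def by (rule member_le_sum) (use that in auto)
    then show ?thesis using x(2)[OF that(1)] by linarith
  qed
  have b: "\<bar>NN s\<bar> \<le> f x + 1" if "s \<in> {0..T}" for s
  proof -
    have "\<bar>NN s\<bar> \<le> f s" unfolding NN_def f_def by (rule sum_abs)
    then show ?thesis using x(2)[OF that] by linarith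
  qed
  have "f x \<ge> 0" unfolding f_def by (intro sum_nonneg) auto
  then show ?thesis using that[of "f x + 1"] a b by auto
qed

lemma nonneg_T:
  assumes T: "T > 0"
  shows "\<forall>s\<in>{0..T}. \<forall>l\<in>{1..m}. u s l \<ge> 0"
proof -
  obtain K where K: "K > 0" "\<And>s j. s \<in> {0..T} \<Longrightarrow> j \<in> {1..m} \<Longrightarrow> \<bar>u s j\<bar> \<le> K"
    "\<And>s. s \<in> {0..T} \<Longrightarrow> \<bar>NN s\<bar> \<le> K"
    using bound_on[of T] T by auto
  define W where "W = Wc gam q m K"
  define C where "C = 2 * W + 1"
  have claim: "\<forall>s\<in>{0..T}. \<forall>l\<in>{1..m}. u s l + e * exp (C * s) > 0" if e: "e > 0" for e
  proof (rule ccontr)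
    assume neg: "\<not> (\<forall>s\<in>{0..T}. \<forall>l\<in>{1..m}. u s l + e * exp (C * s) > 0)"
    define v where "v l s = u s l + e * exp (C * s)" for l s
    define S where "S = {s\<in>{0..T}. \<exists>l\<in>{1..m}. v l s \<le> 0}"
    have Sne: "S \<noteq> {}" using neg unfolding S_def v_def by force
    have Sbdd: "bdd_below S" unfolding S_def by (rule bdd_belowI[of _ 0]) auto
    have vc: "continuous_on {0..T} (v l)" for l
      unfolding v_def by (intro continuous_intros continuous_on_subset[OF u_cont]) auto
    have eqS: "S = (\<Union>l\<in>{1..m}. {0..T} \<inter> v l -` {..0})" unfolding S_def by auto
    have cl: "closed ({0..T} \<inter> v l -` {..0})" for l
      by (rule continuous_closed_preimage[OF vc]) auto
    have "closed (\<Union>l\<in>{1..m}. {0..T} \<inter> v l -` {..0})"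
      by (rule closed_UN) (use cl in auto)
    then have Scl: "closed S" by (simp only: eqS)
    define ts where "ts = Inf S"
    have tsS: "ts \<in> S" unfolding ts_def by (rule closed_contains_Inf[OF Sne Sbdd Scl])
    then obtain l where l: "l \<in> {1..m}" "v l ts \<le> 0" and tsT: "ts \<in> {0..T}" unfolding S_def by auto
    have ts0: "ts > 0"
    proof (rule ccontr)
      assume "\<not> ts > 0"
      then have "ts = 0" using tsT by simp
      moreover have "y l \<ge> 0" using X0pD(2)[OF yX] by simp
      ultimately have "v l ts > 0" using l(1) e by (simp add: v_def u_init)
      then show False using l(2) by simp
    qed
    have below: "v j s > 0" if "s \<in> {0..<ts}" "j \<in> {1..m}" for s j
    proof (rule ccontr)
      assume nv: "\<not> v j s > 0"
      have sT: "s \<in> {0..T}" using that tsT by auto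
      have "\<exists>l\<in>{1..m}. v l s \<le> 0" using nv that(2) by (intro bexI[of _ j]) auto
      then have "s \<in> S" unfolding S_def using sT by simp
      then have "ts \<le> s" unfolding ts_def by (rule cInf_lower[OF _ Sbdd])
      then show False using that(1) by simp
    qed
    have vder: "(v j has_real_derivative dF ts j + e * (exp (C * ts) * C)) (at ts)" if "j \<in> {1..m}" for j
      unfolding v_def
      by (rule derivative_eq_intros deriv_at[OF ts0] | use that in simp)+
    have geq: "v j ts \<ge> 0" if j: "j \<in> {1..m}" for j
    proof -
      have "isCont (v j) ts" by (rule DERIV_isCont[OF vder[OF j]])
      then have "(v j \<longlongrightarrow> v j ts) (at_left ts)" using filterlim_at_split by (auto simp: isCont_def)
      moreover have "eventually (\<lambda>s. 0 \<le> v j s) (at_left ts)"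
        using eventually_at_left_real[OF ts0]
      proof eventually_elim
        case (elim s)
        then have "s \<in> {0..<ts}" by simp
        then have "v j s > 0" by (rule below[OF _ j])
        then show ?case by simp
      qed
      ultimately show ?thesis by (rule tendsto_lowerbound) simp
    qed
    define d where "d = e * exp (C * ts)"
    have d0: "d > 0" using e by (simp add: d_def)
    have ul: "u ts l = -d" using geq[OF l(1)] l(2) by (simp add: v_def d_def)
    have uj: "u ts j \<ge> -d" if "j \<in> {1..m}" for j using geq[OF that] by (simp add: v_def d_def)
    have Nl: "NN ts \<ge> -(real m * d)"
    proof -
      have "NN ts \<ge> (\<Sum>j\<in>{1..m}. -d)" unfolding NN_def by (intro sum_mono uj) auto
      then show ?thesis by simp
    qed
    have dl: "dF ts l \<ge> -(2 * W * d)"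
    proof -
      have "dFf m (\<lambda>k. gam k * (u ts 1 * u ts k - NN ts * q k / q (Suc k) * u ts (Suc k))) l \<ge> -(2 * Wc gam q m K * d)"
        by (rule dF_lower[OF m2 gpos qpos]) (use d0 K(2)[OF tsT] K(3)[OF tsT] uj Nl l(1) ul in auto)
      then show ?thesis unfolding dF_def JJ_def W_def .
    qed
    have "dF ts l + e * (exp (C * ts) * C) = dF ts l + C * d" by (simp add: d_def)
    also have "\<dots> \<ge> -(2 * W * d) + C * d" using dl by simp
    also have "-(2 * W * d) + C * d = d" by (simp add: C_def algebra_simps)
    finally have dpos: "dF ts l + e * (exp (C * ts) * C) > 0" using d0 by simp
    obtain dd where dd: "dd > 0" "\<And>h. h > 0 \<Longrightarrow> h < dd \<Longrightarrow> v l (ts - h) < v l ts"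
      using DERIV_pos_inc_left[OF vder[OF l(1)] dpos] by blast
    define h where "h = min (dd / 2) (ts / 2)"
    have h: "h > 0" "h < dd" "ts - h \<in> {0..<ts}" using dd ts0 by (auto simp: h_def)
    have "v l (ts - h) < v l ts" by (rule dd(2)[OF h(1,2)])
    moreover have "v l (ts - h) > 0" by (rule below[OF h(3) l(1)])
    ultimately show False using l(2) by simp
  qed
  show ?thesis
  proof (intro ballI)
    fix s l assume s: "s \<in> {0..T}" and l: "l \<in> {1..m}"
    show "u s l \<ge> 0"
    proof (rule ccontr)
      assume "\<not> u s l \<ge> 0"
      then have neg: "u s l < 0" by simp
      define e where "e = - u s l / (2 * exp (C * s))"
      have e: "e > 0" unfolding e_def by (intro divide_pos_pos) (use neg in auto)
      have "u s l + e * exp (C * s) = u s l / 2" by (simp add: e_def field_simps)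
      then have "u s l + e * exp (C * s) < 0" using neg by simp
      then show False using claim[OF e] s l by force
    qed
  qed
qed

lemma nonneg: assumes "t \<ge> 0" shows "u t l \<ge> 0"
proof (cases "1 \<le> l \<and> l \<le> m")
  case False
  then have "l = 0 \<or> l > m" by auto
  then have "u t l = 0" by (rule u_zero[OF assms])
  then show ?thesis by simp
next
  case True
  show ?thesis
  proof (cases "t = 0")
    case True
    then show ?thesis using u_init \<open>1 \<le> l \<and> l \<le> m\<close> X0pD(2)[OF yX] by simp
  next
    case False
    then have "t > 0" using assms by simp
    then show ?thesis using nonneg_T[of t] True by auto
  qed
qed

end


lemma log_sqrt_ineq1:
  fixes a b :: real
  assumes b: "b > 0" and ab: "a \<ge> b"
  shows "(a - b) * (ln a - ln b) \<ge> (sqrt a - sqrt b) ^ 2"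
proof -
  have a: "a > 0" using ab b by simp
  have "ln (b / a) \<le> b / a - 1" by (rule ln_le_minus_one) (use a b in simp)
  then have "ln b - ln a \<le> b / a - 1" using a b by (simp add: ln_divide_pos)
  then have l: "ln a - ln b \<ge> (a - b) / a" using a by (simp add: field_simps)
  have "(a - b) * (ln a - ln b) \<ge> (a - b) * ((a - b) / a)" using l ab by (intro mult_left_mono) auto
  moreover have "(sqrt a - sqrt b) ^ 2 \<le> (a - b) * ((a - b) / a)"
  proof -
    define sa where "sa = sqrt a"
    define sb where "sb = sqrt b"
    have sa: "sa > 0" "sa * sa = a" using a by (auto simp: sa_def)
    have sb: "sb > 0" "sb * sb = b" using b by (auto simp: sb_def)
    have "(sa - sb) ^ 2 * (sa * sa) \<le> (sa - sb) ^ 2 * ((sa + sb) * (sa + sb))"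
      using sa sb by (intro mult_left_mono) (auto simp: algebra_simps)
    also have "\<dots> = (a - b) * (a - b)" using sa(2) sb(2) by (simp add: power2_eq_square algebra_simps)
    finally have "(sa - sb) ^ 2 * a \<le> (a - b) * (a - b)" using sa(2) by simp
    then show ?thesis using a unfolding sa_def sb_def by (simp add: field_simps)
  qed
  ultimately show ?thesis by linarith
qed

lemma log_sqrt_ineq:
  fixes a b :: real
  assumes a: "a > 0" and b: "b > 0"
  shows "(a - b) * (ln a - ln b) \<ge> (sqrt a - sqrt b) ^ 2"
proof (cases "a \<ge> b")
  case True then show ?thesis using log_sqrt_ineq1[OF b] by simp
next
  case False
  then have "(b - a) * (ln b - ln a) \<ge> (sqrt b - sqrt a) ^ 2" using log_sqrt_ineq1[OF a] by simp
  moreover have "(b - a) * (ln b - ln a) = (a - b) * (ln a - ln b)" by (simp add: algebra_simps)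
  moreover have "(sqrt b - sqrt a) ^ 2 = (sqrt a - sqrt b) ^ 2" by (simp add: power2_commute)
  ultimately show ?thesis by simp
qed

context trunc
begin

definition M0 :: real where "M0 = (\<Sum>l\<in>{1..m}. real l * y l)"

lemma M0_le: "M0 \<le> rho y"
proof -
  have "(\<Sum>l\<in>{1..m}. real l * y l) \<le> suminf (\<lambda>l. real l * y l)"
    by (rule sum_le_suminf) (use X0pD[OF yX] in \<open>simp_all add: mult_nonneg_nonneg\<close>)
  then show ?thesis by (simp add: M0_def rho_def)
qed

lemma M0_nonneg: "M0 \<ge> 0"
  unfolding M0_def by (intro sum_nonneg mult_nonneg_nonneg) (use X0pD(2)[OF yX] in auto)

lemma u_le_M0: assumes t: "t \<ge> 0" and j: "j \<in> {1..m}" shows "u t j \<le> M0"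
proof -
  have "u t j \<le> real j * u t j" using j nonneg[OF t, of j] by (intro le_l_mult) auto
  also have "\<dots> \<le> (\<Sum>l\<in>{1..m}. real l * u t l)"
    by (rule member_le_sum) (use j nonneg[OF t] in \<open>auto intro: mult_nonneg_nonneg\<close>)
  also have "\<dots> = M0" unfolding M0_def by (rule mass_cons[OF t])
  finally show ?thesis .
qed

lemma NN_nonneg: "t \<ge> 0 \<Longrightarrow> NN t \<ge> 0"
  unfolding NN_def by (intro sum_nonneg) (use nonneg in auto)

lemma NN_le_M0: assumes t: "t \<ge> 0" shows "NN t \<le> M0"
proof -
  have "NN t \<le> (\<Sum>l\<in>{1..m}. real l * u t l)"
    unfolding NN_def by (intro sum_mono le_l_mult) (use nonneg[OF t] in auto)
  also have "\<dots> = M0" unfolding M0_def by (rule mass_cons[OF t])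
  finally show ?thesis .
qed

lemma u_X0p: assumes t: "t \<ge> 0" shows "u t \<in> X0p"
proof -
  have fin: "\<And>n. n \<notin> {1..m} \<Longrightarrow> u t n = 0" using u_zero[OF t] by (auto simp: not_le)
  have "summable (\<lambda>l. real l * \<bar>u t l\<bar>)" by (rule summable_finite[of "{1..m}"]) (use fin in auto)
  then show ?thesis using u_zero[OF t, of 0] nonneg[OF t] by (auto simp: X0p_def Xsp_def)
qed

lemma rho_u: assumes t: "t \<ge> 0" shows "rho (u t) = M0"
proof -
  have "rho (u t) = (\<Sum>l\<in>{1..m}. real l * u t l)"
    unfolding rho_def by (rule suminf_finite) (use u_zero[OF t] in \<open>auto simp: not_le\<close>)
  then show ?thesis unfolding M0_def using mass_cons[OF t] by simp
qed

lemma exp_trick: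
  fixes f :: "real \<Rightarrow> real" and G t :: real
  assumes t: "t > 0" and cont: "continuous_on {0..t} f"
    and der: "\<And>x. 0 < x \<Longrightarrow> x < t \<Longrightarrow> (f has_real_derivative f' x) (at x)"
    and low: "\<And>x. 0 < x \<Longrightarrow> x < t \<Longrightarrow> f' x + G * f x > 0"
  shows "exp (G * t) * f t > f 0"
proof -
  have "(\<lambda>x. exp (G * x) * f x) 0 < (\<lambda>x. exp (G * x) * f x) t"
  proof (rule DERIV_pos_imp_increasing_open[of 0 t "\<lambda>x. exp (G * x) * f x", OF t])
    fix x assume x: "0 < x" "x < t"
    have "((\<lambda>x. exp (G * x) * f x) has_real_derivative exp (G * x) * G * f x + exp (G * x) * f' x) (at x)"
      by (rule derivative_eq_intros der[OF x] | simp)+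
    moreover have "exp (G * x) * G * f x + exp (G * x) * f' x = exp (G * x) * (f' x + G * f x)"
      by (simp add: algebra_simps)
    moreover have "exp (G * x) * (f' x + G * f x) > 0" using low[OF x] by simp
    ultimately show "\<exists>y. ((\<lambda>x. exp (G * x) * f x) has_real_derivative y) (at x) \<and> 0 < y" by auto
  next
    show "continuous_on {0..t} (\<lambda>x. exp (G * x) * f x)" by (intro continuous_intros cont)
  qed
  then show ?thesis by simp
qed

lemma exp_trick_nonneg:
  fixes f :: "real \<Rightarrow> real" and G t :: real
  assumes t: "t > 0" and cont: "continuous_on {0..t} f"
    and der: "\<And>x. 0 < x \<Longrightarrow> x < t \<Longrightarrow> (f has_real_derivative f' x) (at x)"
    and low: "\<And>x. 0 < x \<Longrightarrow> x < t \<Longrightarrow> f' x + G * f x \<ge> 0"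
  shows "exp (G * t) * f t \<ge> f 0"
proof -
  have "(\<lambda>x. exp (G * x) * f x) 0 \<le> (\<lambda>x. exp (G * x) * f x) t"
  proof (rule DERIV_nonneg_imp_increasing_open[of 0 t "\<lambda>x. exp (G * x) * f x"])
    fix x assume x: "0 < x" "x < t"
    have "((\<lambda>x. exp (G * x) * f x) has_real_derivative exp (G * x) * G * f x + exp (G * x) * f' x) (at x)"
      by (rule derivative_eq_intros der[OF x] | simp)+
    moreover have "exp (G * x) * G * f x + exp (G * x) * f' x = exp (G * x) * (f' x + G * f x)"
      by (simp add: algebra_simps)
    moreover have "exp (G * x) * (f' x + G * f x) \<ge> 0" using low[OF x] by simp
    ultimately show "\<exists>y. ((\<lambda>x. exp (G * x) * f x) has_real_derivative y) (at x) \<and> 0 \<le> y" by auto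
  next
    show "continuous_on {0..t} (\<lambda>x. exp (G * x) * f x)" by (intro continuous_intros cont)
  qed (use t in simp)
  then show ?thesis by simp
qed

lemma u1_pos: assumes t: "t \<ge> 0" shows "u t 1 > 0"
proof (cases "t = 0")
  case True then show ?thesis using u_init[of 1] y1 m2 by simp
next
  case False
  then have t0: "t > 0" using t by simp
  define G where "G = (gam 1 + (\<Sum>k\<in>{1..<m}. gam k)) * M0"
  have "exp (G * t) * u t 1 \<ge> u 0 1"
  proof (rule exp_trick_nonneg[OF t0, where f' = "\<lambda>x. dF x 1"])
    show "continuous_on {0..t} (\<lambda>s. u s 1)" by (rule continuous_on_subset[OF u_cont]) auto
    show "((\<lambda>s. u s 1) has_real_derivative dF x 1) (at x)" if "0 < x" for x
      by (rule deriv_at[OF that]) (use m2 in auto)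
    fix x assume x: "0 < x" "x < t"
    have x0: "x \<ge> 0" using x by simp
    have nJ: "- JJ x k \<ge> - (gam k * M0 * u x 1)" if k: "k \<ge> 1" "k \<le> m" for k
    proof -
      have g: "gam k > 0" using gpos k by simp
      have "q k > 0" "q (Suc k) > 0" using qpos k by auto
      then have "NN x * q k / q (Suc k) * u x (Suc k) \<ge> 0"
        using NN_nonneg[OF x0] nonneg[OF x0]
        by (intro mult_nonneg_nonneg divide_nonneg_nonneg) auto
      moreover have "u x 1 * u x k \<le> u x 1 * M0"
        using u_le_M0[OF x0, of k] k nonneg[OF x0] by (intro mult_left_mono) auto
      ultimately have "u x 1 * u x k - NN x * q k / q (Suc k) * u x (Suc k) \<le> M0 * u x 1"
        by (simp add: mult.commute)
      then have "gam k * (u x 1 * u x k - NN x * q k / q (Suc k) * u x (Suc k)) \<le> gam k * (M0 * u x 1)"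
        using g by (intro mult_left_mono) auto
      then show ?thesis unfolding JJ_def by (simp add: mult.assoc)
    qed
    have "dF x 1 = - JJ x 1 + (\<Sum>k\<in>{1..<m}. - JJ x k)" by (simp add: dF_def dFf_def sum_negf)
    also have "\<dots> \<ge> - (gam 1 * M0 * u x 1) + (\<Sum>k\<in>{1..<m}. - (gam k * M0 * u x 1))"
      using nJ m2 by (intro add_mono sum_mono) auto
    also have "- (gam 1 * M0 * u x 1) + (\<Sum>k\<in>{1..<m}. - (gam k * M0 * u x 1)) = - (G * u x 1)"
    proof -
      have "(\<Sum>k\<in>{1..<m}. - (gam k * M0 * u x 1)) = - ((\<Sum>k\<in>{1..<m}. gam k) * M0 * u x 1)"
        by (simp only: sum_negf sum_distrib_right)
      then show ?thesis unfolding G_def by (simp add: algebra_simps)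
    qed
    finally show "dF x 1 + G * u x 1 \<ge> 0" by simp
  qed
  then have "exp (G * t) * u t 1 > 0" using u_init[of 1] y1 m2 by simp
  then show ?thesis by (simp add: zero_less_mult_iff)
qed

lemma ul_pos: assumes t: "t > 0" and l: "1 \<le> l" "l \<le> m" shows "u t l > 0"
  using l t
proof (induction l arbitrary: t rule: nat_induct_at_least)
  case base
  then have "t \<ge> 0" by simp
  then show ?case using u1_pos by simp
next
  case (Suc l)
  have t: "t > 0" using Suc.prems(2) .
  have lm: "l \<le> m" using Suc.prems(1) by simp
  define G where "G = (gam l * (q l / q (Suc l)) + gam (Suc l)) * M0"
  have gl: "gam l > 0" "gam (Suc l) > 0" using gpos Suc by auto
  have "exp (G * t) * u t (Suc l) > u 0 (Suc l)"
  proof (rule exp_trick[OF t, where f' = "\<lambda>x. dF x (Suc l)"])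
    show "continuous_on {0..t} (\<lambda>s. u s (Suc l))" by (rule continuous_on_subset[OF u_cont]) auto
    show "((\<lambda>s. u s (Suc l)) has_real_derivative dF x (Suc l)) (at x)" if "0 < x" for x
      by (rule deriv_at[OF that]) (use Suc in auto)
    fix x assume x: "0 < x" "x < t"
    have x0: "x \<ge> 0" using x by simp
    have pos: "u x 1 * u x l > 0" using u1_pos[OF x0] Suc.IH[OF lm x(1)] by simp
    have r: "q l / q (Suc l) > 0" using qpos Suc by simp
    have a1: "gam l * (NN x * q l / q (Suc l) * u x (Suc l)) \<le> gam l * (q l / q (Suc l)) * M0 * u x (Suc l)"
    proof -
      have h: "NN x * (q l / q (Suc l)) * u x (Suc l) \<le> M0 * (q l / q (Suc l)) * u x (Suc l)"
        using NN_le_M0[OF x0] r nonneg[OF x0, of "Suc l"] by (intro mult_right_mono) auto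
      have e1: "NN x * q l / q (Suc l) * u x (Suc l) = NN x * (q l / q (Suc l)) * u x (Suc l)" by simp
      have e2: "gam l * (q l / q (Suc l)) * M0 * u x (Suc l) = gam l * (M0 * (q l / q (Suc l)) * u x (Suc l))"
        by (simp only: mult_ac)
      show ?thesis unfolding e1 e2 by (rule mult_left_mono[OF h]) (use gl in simp)
    qed
    have a2: "gam (Suc l) * (u x 1 * u x (Suc l)) \<le> gam (Suc l) * M0 * u x (Suc l)"
    proof -
      have "u x 1 * u x (Suc l) \<le> M0 * u x (Suc l)"
        using u_le_M0[OF x0, of 1] m2 nonneg[OF x0, of "Suc l"] by (intro mult_right_mono) auto
      then show ?thesis using gl by (simp add: mult_left_mono mult_ac)
    qed
    have "q (Suc l) > 0" "q (Suc (Suc l)) > 0" using qpos by auto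
    then have a3: "gam (Suc l) * (NN x * q (Suc l) / q (Suc (Suc l)) * u x (Suc (Suc l))) \<ge> 0"
      using gl NN_nonneg[OF x0] nonneg[OF x0]
      by (intro mult_nonneg_nonneg divide_nonneg_nonneg) auto
    have a4: "gam (Suc l) * M0 * u x (Suc l) \<ge> 0" using gl M0_nonneg nonneg[OF x0] by simp
    have "dF x (Suc l) \<ge> gam l * (u x 1 * u x l) - G * u x (Suc l)"
    proof (cases "Suc l = m")
      case True
      moreover have "m - 1 = l" using True by simp
      ultimately have "dF x (Suc l) = JJ x l" using Suc by (simp add: dF_def dFf_def)
      then show ?thesis using a1 a4 unfolding JJ_def G_def by (simp add: algebra_simps)
    next
      case False
      then have "dF x (Suc l) = JJ x l - JJ x (Suc l)" using Suc by (simp add: dF_def dFf_def)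
      then show ?thesis using a1 a2 a3 unfolding JJ_def G_def by (simp add: algebra_simps)
    qed
    moreover have "gam l * (u x 1 * u x l) > 0" using gl pos by simp
    ultimately show "dF x (Suc l) + G * u x (Suc l) > 0" by linarith
  qed
  moreover have "u 0 (Suc l) \<ge> 0" using nonneg[of 0] by simp
  ultimately have "exp (G * t) * u t (Suc l) > 0" by linarith
  then show ?case by (simp add: zero_less_mult_iff)
qed

end


definition edis :: "(nat \<Rightarrow> real) \<Rightarrow> (nat \<Rightarrow> real) \<Rightarrow> (nat \<Rightarrow> real) \<Rightarrow> nat \<Rightarrow> real" where
  "edis gam q z k = gam k * (sqrt (z 1 * z k) - sqrt (Ntot z * q k / q (Suc k) * z (Suc k))) ^ 2"

lemma edis_nonneg: "gam k > 0 \<Longrightarrow> edis gam q z k \<ge> 0"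
  unfolding edis_def by simp

lemma xlnx_deriv: "x > 0 \<Longrightarrow> (xlnx has_real_derivative ln x + 1) (at x)"
  unfolding xlnx_def[abs_def] by (rule derivative_eq_intros | simp)+

lemma sum_half_pow: "(\<Sum>l\<in>{1..m}. (1/2::real) ^ l) \<le> 2"
proof -
  have "(\<Sum>l\<in>{1..m}. (1/2::real) ^ l) \<le> (\<Sum>l<Suc m. (1/2::real) ^ l)"
    by (rule sum_mono2) auto
  also have "\<dots> = (1 - (1/2) ^ Suc m) / (1 - 1/2)" by (simp add: sum_gp_strict)
  also have "\<dots> \<le> 2" by simp
  finally show ?thesis .
qed

context trunc
begin

definition H :: "real \<Rightarrow> real" where
  "H t = (\<Sum>l\<in>{1..m}. xlnx (u t l) - u t l * ln (q l)) - xlnx (NN t)"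

definition E :: "real \<Rightarrow> real" where
  "E t = (\<Sum>k\<in>{1..<m}. edis gam q (u t) k)"

definition HD :: "real \<Rightarrow> real" where
  "HD t = (\<Sum>l\<in>{1..m}. (ln (u t l) + 1) * dF t l - dF t l * ln (q l)) - (ln (NN t) + 1) * (\<Sum>l\<in>{1..m}. dF t l)"

lemma NN_pos: "t \<ge> 0 \<Longrightarrow> NN t > 0"
proof -
  assume t: "t \<ge> 0"
  have "u t 1 \<le> NN t" unfolding NN_def by (rule member_le_sum) (use m2 nonneg[OF t] in auto)
  then show ?thesis using u1_pos[OF t] by simp
qed

lemma H_deriv: assumes t: "t > 0" shows "(H has_real_derivative HD t) (at t)"
proof -
  have du: "((\<lambda>s. u s l) has_real_derivative dF t l) (at t)" if "l \<in> {1..m}" for l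
    using deriv_at[OF t] that by auto
  have dx: "((\<lambda>s. xlnx (u s l)) has_real_derivative (ln (u t l) + 1) * dF t l) (at t)" if "l \<in> {1..m}" for l
    by (rule DERIV_chain2[OF xlnx_deriv du[OF that]]) (use ul_pos[OF t] that in auto)
  have dN: "(NN has_real_derivative (\<Sum>l\<in>{1..m}. dF t l)) (at t)"
    unfolding NN_def[abs_def] by (rule DERIV_sum) (rule du)
  have dxN: "((\<lambda>s. xlnx (NN s)) has_real_derivative (ln (NN t) + 1) * (\<Sum>l\<in>{1..m}. dF t l)) (at t)"
    by (rule DERIV_chain2[OF xlnx_deriv dN]) (use NN_pos t in auto)
  have dS: "((\<lambda>s. \<Sum>l\<in>{1..m}. xlnx (u s l) - u s l * ln (q l)) has_real_derivative
      (\<Sum>l\<in>{1..m}. (ln (u t l) + 1) * dF t l - dF t l * ln (q l))) (at t)"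
    by (rule DERIV_sum) (intro DERIV_diff dx DERIV_cmult_right du; assumption)
  show ?thesis unfolding H_def[abs_def] HD_def by (rule DERIV_diff[OF dS dxN])
qed

lemma HD_le: assumes t: "t > 0" shows "HD t \<le> - E t"
proof -
  have t0: "t \<ge> 0" using t by simp
  define c where "c l = ln (u t l) - ln (q l) - ln (NN t)" for l
  have "HD t = (\<Sum>l\<in>{1..m}. c l * dF t l)"
  proof -
    have "(ln (NN t) + 1) * (\<Sum>l\<in>{1..m}. dF t l) = (\<Sum>l\<in>{1..m}. (ln (NN t) + 1) * dF t l)"
      by (rule sum_distrib_left)
    then have "HD t = (\<Sum>l\<in>{1..m}. ((ln (u t l) + 1) * dF t l - dF t l * ln (q l)) - (ln (NN t) + 1) * dF t l)"
      unfolding HD_def by (simp add: sum_subtractf)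
    also have "\<dots> = (\<Sum>l\<in>{1..m}. c l * dF t l)"
      by (intro sum.cong) (auto simp: c_def algebra_simps)
    finally show ?thesis .
  qed
  also have "\<dots> = - (\<Sum>k\<in>{1..<m}. JJ t k * (c 1 + c k - c (Suc k)))"
    unfolding dF_def by (rule wsum_id[OF m2])
  also have "\<dots> \<le> - E t"
  proof -
    have "(\<Sum>k\<in>{1..<m}. edis gam q (u t) k) \<le> (\<Sum>k\<in>{1..<m}. JJ t k * (c 1 + c k - c (Suc k)))"
    proof (rule sum_mono)
      fix k assume k: "k \<in> {1..<m}"
      define a where "a = u t 1 * u t k"
      define b where "b = NN t * q k / q (Suc k) * u t (Suc k)"
      have pos: "u t 1 > 0" "u t k > 0" "u t (Suc k) > 0" "NN t > 0" "q k > 0" "q (Suc k) > 0"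
        using ul_pos[OF t] k NN_pos[OF t0] qpos by auto
      have ap: "a > 0" and bp: "b > 0" using pos by (auto simp: a_def b_def)
      have la: "ln a = ln (u t 1) + ln (u t k)" unfolding a_def using pos by (simp add: ln_mult_pos)
      have lb: "ln b = ln (NN t) + ln (q k) - ln (q (Suc k)) + ln (u t (Suc k))"
        unfolding b_def using pos by (simp add: ln_mult_pos ln_divide_pos)
      have "c 1 + c k - c (Suc k) = ln a - ln b" unfolding c_def la lb using q1 by simp
      moreover have "JJ t k = gam k * (a - b)" unfolding JJ_def a_def b_def by simp
      moreover have "edis gam q (u t) k = gam k * (sqrt a - sqrt b) ^ 2"
        unfolding edis_def a_def b_def Ntot_u[OF t0] by simp
      moreover have "gam k * (sqrt a - sqrt b) ^ 2 \<le> gam k * ((a - b) * (ln a - ln b))"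
        using gpos k log_sqrt_ineq[OF ap bp] by (intro mult_left_mono) auto
      ultimately show "edis gam q (u t) k \<le> JJ t k * (c 1 + c k - c (Suc k))" by (simp add: mult_ac)
    qed
    then show ?thesis unfolding E_def by simp
  qed
  finally show ?thesis .
qed

lemma E_eq: assumes "t \<ge> 0"
  shows "E t = (\<Sum>k\<in>{1..<m}. gam k * (sqrt (u t 1 * u t k) - sqrt (NN t * q k / q (Suc k) * u t (Suc k))) ^ 2)"
  unfolding E_def edis_def Ntot_u[OF assms] ..

lemma E_cont: "continuous_on {0..} E"
proof -
  have qS: "q (Suc k) \<noteq> 0" for k using qpos[rule_format, of "Suc k"] by simp
  have "continuous_on {0..} (\<lambda>t. \<Sum>k\<in>{1..<m}. gam k * (sqrt (u t 1 * u t k) - sqrt (NN t * q k / q (Suc k) * u t (Suc k))) ^ 2)"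
    by (intro continuous_intros u_cont NN_cont) (auto simp: qS)
  moreover have "continuous_on {0..} E \<longleftrightarrow> continuous_on {0..} (\<lambda>t. \<Sum>k\<in>{1..<m}. gam k * (sqrt (u t 1 * u t k) - sqrt (NN t * q k / q (Suc k) * u t (Suc k))) ^ 2)"
    by (intro continuous_on_cong refl) (simp add: E_eq)
  ultimately show ?thesis by simp
qed

lemma H_cont: "continuous_on {0..} H"
proof -
  have c1: "continuous_on {0..} (\<lambda>s. xlnx (u s l))" for l
    by (rule continuous_on_compose2[OF xlnx_cont u_cont]) (use nonneg in auto)
  have c2: "continuous_on {0..} (\<lambda>s. xlnx (NN s))"
    by (rule continuous_on_compose2[OF xlnx_cont NN_cont]) (use NN_nonneg in auto)
  show ?thesis unfolding H_def[abs_def] by (intro continuous_intros c1 c2 u_cont)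
qed

lemma E_nonneg: "E t \<ge> 0"
  unfolding E_def by (intro sum_nonneg edis_nonneg) (use gpos in auto)

lemma entropy_ineq: assumes t: "t \<ge> 0" shows "H t + integral {0..t} E \<le> H 0"
proof (cases "t = 0")
  case True then show ?thesis by simp
next
  case False
  then have t0: "t > 0" using t by simp
  have Ec: "continuous_on {0..t} E" by (rule continuous_on_subset[OF E_cont]) auto
  have Hc: "continuous_on {0..t} H" by (rule continuous_on_subset[OF H_cont]) auto
  have "(\<lambda>s. H s + integral {0..s} E) 0 \<ge> (\<lambda>s. H s + integral {0..s} E) t"
  proof (rule DERIV_nonpos_imp_decreasing_open[of 0 t "\<lambda>s. H s + integral {0..s} E"])
    fix x assume x: "0 < x" "x < t"
    have "((\<lambda>s. integral {0..s} E) has_real_derivative E x) (at x within {0..t})"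
      by (rule integral_has_real_derivative[OF Ec]) (use x in auto)
    moreover have "at x within {0..t} = at x" by (rule at_within_Icc_at) (use x in auto)
    ultimately have dI: "((\<lambda>s. integral {0..s} E) has_real_derivative E x) (at x)" by simp
    have "((\<lambda>s. H s + integral {0..s} E) has_real_derivative HD x + E x) (at x)"
      by (rule DERIV_add[OF H_deriv dI]) (use x in simp)
    moreover have "HD x + E x \<le> 0" using HD_le[of x] x by simp
    ultimately show "\<exists>y. ((\<lambda>s. H s + integral {0..s} E) has_real_derivative y) (at x) \<and> y \<le> 0" by blast
  next
    show "continuous_on {0..t} (\<lambda>s. H s + integral {0..s} E)"
      by (intro continuous_on_add Hc indefinite_integral_continuous_1 integrable_continuous_real Ec)
  qed (use t in simp)
  then show ?thesis by simp
qed

end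


context trunc
begin

lemma H_lower:
  assumes Bq: "Bq \<ge> 0" "\<forall>l\<ge>1. \<bar>ln (q l)\<bar> \<le> Bq * real l" and t: "t \<ge> 0"
  shows "H t \<ge> -((ln 2 + Bq) * M0 + 2 + M0 ^ 2)"
proof -
  have trm: "xlnx (u t l) - u t l * ln (q l) \<ge> -((ln 2 + Bq) * (real l * u t l)) - (1/2) ^ l"
    if l: "l \<in> {1..m}" for l
  proof -
    have x: "u t l \<ge> 0" using nonneg[OF t] .
    have "xlnx (u t l) \<ge> u t l * ln ((1/2) ^ l) + u t l - (1/2) ^ l"
      by (rule xlnx_lower[OF x]) simp
    moreover have "ln ((1/2::real) ^ l) = - (real l * ln 2)" by (simp add: ln_realpow ln_div)
    ultimately have a: "xlnx (u t l) \<ge> - (ln 2 * (real l * u t l)) - (1/2) ^ l"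
      using x by (simp add: algebra_simps)
    have "u t l * ln (q l) \<le> u t l * \<bar>ln (q l)\<bar>" using x by (intro mult_left_mono) auto
    also have "\<dots> \<le> u t l * (Bq * real l)" using x Bq(2) l by (intro mult_left_mono) auto
    finally have b: "u t l * ln (q l) \<le> Bq * (real l * u t l)" by (simp add: mult_ac)
    show ?thesis using a b by (simp add: algebra_simps)
  qed
  have "(\<Sum>l\<in>{1..m}. xlnx (u t l) - u t l * ln (q l)) \<ge> (\<Sum>l\<in>{1..m}. -((ln 2 + Bq) * (real l * u t l)) - (1/2) ^ l)"
    by (intro sum_mono trm)
  also have "(\<Sum>l\<in>{1..m}. -((ln 2 + Bq) * (real l * u t l)) - (1/2) ^ l)
      = -((ln 2 + Bq) * (\<Sum>l\<in>{1..m}. real l * u t l)) - (\<Sum>l\<in>{1..m}. (1/2::real) ^ l)"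
    by (simp add: sum_subtractf sum_negf sum_distrib_left)
  also have "(\<Sum>l\<in>{1..m}. real l * u t l) = M0" unfolding M0_def by (rule mass_cons[OF t])
  finally have s: "(\<Sum>l\<in>{1..m}. xlnx (u t l) - u t l * ln (q l)) \<ge> -((ln 2 + Bq) * M0) - 2"
    using sum_half_pow[of m] by linarith
  have N0: "NN t \<ge> 0" "NN t \<le> M0" using NN_nonneg[OF t] NN_le_M0[OF t] by auto
  have "xlnx (NN t) \<le> NN t * (NN t - 1)" by (rule xlnx_upper[OF N0(1)])
  also have "\<dots> \<le> NN t * NN t" using N0 by (simp add: algebra_simps)
  also have "\<dots> \<le> M0 * M0" using N0 by (intro mult_mono) auto
  finally have "xlnx (NN t) \<le> M0 ^ 2" by (simp add: power2_eq_square)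
  then show ?thesis using s unfolding H_def by (simp add: algebra_simps)
qed

lemma H0_upper:
  assumes Bq: "Bq \<ge> 0" "\<forall>l\<ge>1. \<bar>ln (q l)\<bar> \<le> Bq * real l"
  shows "H 0 \<le> rho y * M0 + Bq * M0 + 1"
proof -
  have trm: "xlnx (u 0 l) - u 0 l * ln (q l) \<le> rho y * y l + Bq * (real l * y l)"
    if l: "l \<in> {1..m}" for l
  proof -
    have u0: "u 0 l = y l" using u_init l by auto
    have x: "y l \<ge> 0" using X0pD(2)[OF yX] .
    have yr: "y l \<le> rho y" by (rule X0p_comp_le_rho[OF yX])
    have "xlnx (y l) \<le> y l * (y l - 1)" by (rule xlnx_upper[OF x])
    also have "\<dots> \<le> y l * y l" using x by (simp add: algebra_simps)
    also have "\<dots> \<le> rho y * y l" using x yr by (intro mult_right_mono) auto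
    finally have a: "xlnx (y l) \<le> rho y * y l" .
    have "y l * (- ln (q l)) \<le> y l * \<bar>ln (q l)\<bar>" using x by (intro mult_left_mono) auto
    then have "- (y l * ln (q l)) \<le> y l * \<bar>ln (q l)\<bar>" by simp
    also have "\<dots> \<le> y l * (Bq * real l)" using x Bq(2) l by (intro mult_left_mono) auto
    finally have b: "- (y l * ln (q l)) \<le> Bq * (real l * y l)" by (simp add: mult_ac)
    show ?thesis using a b u0 by simp
  qed
  have "(\<Sum>l\<in>{1..m}. xlnx (u 0 l) - u 0 l * ln (q l)) \<le> (\<Sum>l\<in>{1..m}. rho y * y l + Bq * (real l * y l))"
    by (intro sum_mono trm)
  also have "\<dots> = rho y * (\<Sum>l\<in>{1..m}. y l) + Bq * M0"
    unfolding M0_def by (simp add: sum.distrib sum_distrib_left)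
  also have "(\<Sum>l\<in>{1..m}. y l) \<le> M0"
    unfolding M0_def by (intro sum_mono le_l_mult) (use X0pD(2)[OF yX] in auto)
  then have "rho y * (\<Sum>l\<in>{1..m}. y l) \<le> rho y * M0"
    using X0p_rho_nonneg[OF yX] by (intro mult_left_mono) auto
  finally have s: "(\<Sum>l\<in>{1..m}. xlnx (u 0 l) - u 0 l * ln (q l)) \<le> rho y * M0 + Bq * M0"
    by linarith
  have "xlnx (NN 0) \<ge> -1" by (rule xlnx_ge_minus1) (use NN_nonneg[of 0] in simp)
  then show ?thesis using s unfolding H_def by simp
qed

lemma edis_cont: "continuous_on {0..} (\<lambda>s. edis gam q (u s) k)"
proof -
  have qS: "q (Suc k) \<noteq> 0" using qpos[rule_format, of "Suc k"] by simp
  have "continuous_on {0..} (\<lambda>t. gam k * (sqrt (u t 1 * u t k) - sqrt (NN t * q k / q (Suc k) * u t (Suc k))) ^ 2)"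
    by (intro continuous_intros u_cont NN_cont) (auto simp: qS)
  moreover have "continuous_on {0..} (\<lambda>s. edis gam q (u s) k) \<longleftrightarrow>
      continuous_on {0..} (\<lambda>t. gam k * (sqrt (u t 1 * u t k) - sqrt (NN t * q k / q (Suc k) * u t (Suc k))) ^ 2)"
    by (intro continuous_on_cong refl) (simp add: edis_def Ntot_u)
  ultimately show ?thesis by simp
qed

definition Cst :: "real \<Rightarrow> real \<Rightarrow> real" where
  "Cst rh Bq = 2 * (rh * rh) + 2 * (Bq * rh) + ln 2 * rh + 3"

lemma trunc_int_bound:
  assumes Bq: "Bq \<ge> 0" "\<forall>l\<ge>1. \<bar>ln (q l)\<bar> \<le> Bq * real l" and t: "t \<ge> 0" and L: "L < m"
  shows "integral {0..t} (\<lambda>s. \<Sum>k\<in>{1..L}. edis gam q (u s) k) \<le> Cst (rho y) Bq"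
proof -
  have cL: "continuous_on {0..t} (\<lambda>s. \<Sum>k\<in>{1..L}. edis gam q (u s) k)"
    by (intro continuous_on_sum continuous_on_subset[OF edis_cont]) auto
  have cE: "continuous_on {0..t} E" by (rule continuous_on_subset[OF E_cont]) auto
  have "integral {0..t} (\<lambda>s. \<Sum>k\<in>{1..L}. edis gam q (u s) k) \<le> integral {0..t} E"
  proof (rule integral_le[OF integrable_continuous_real[OF cL] integrable_continuous_real[OF cE]])
    fix s assume "s \<in> {0..t}"
    show "(\<Sum>k\<in>{1..L}. edis gam q (u s) k) \<le> E s"
      unfolding E_def by (rule sum_mono2) (use L gpos in \<open>auto intro: edis_nonneg\<close>)
  qed
  also have "integral {0..t} E \<le> H 0 - H t" using entropy_ineq[OF t] by simp
  also have "H 0 - H t \<le> (rho y * M0 + Bq * M0 + 1) + ((ln 2 + Bq) * M0 + 2 + M0 ^ 2)"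
    using H0_upper[OF Bq] H_lower[OF Bq t] by linarith
  also have "\<dots> \<le> Cst (rho y) Bq"
  proof -
    have M: "0 \<le> M0" "M0 \<le> rho y" using M0_nonneg M0_le by auto
    have "rho y * M0 \<le> rho y * rho y" using M X0p_rho_nonneg[OF yX] by (intro mult_left_mono) auto
    moreover have "Bq * M0 \<le> Bq * rho y" using M Bq(1) by (intro mult_left_mono) auto
    moreover have "ln 2 * M0 \<le> ln 2 * rho y" using M by (intro mult_left_mono) auto
    moreover have "M0 ^ 2 \<le> rho y * rho y" using M by (simp add: power2_eq_square mult_mono)
    moreover have "(ln 2 + Bq) * M0 = ln 2 * M0 + Bq * M0" by (simp add: distrib_right)
    ultimately show ?thesis unfolding Cst_def by linarith
  qed
  finally show ?thesis .
qed

end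


lemma edis_bound:
  assumes w: "w \<in> Bset M" and k: "k \<ge> 1" and g: "gam k > 0" and qp: "\<forall>l\<ge>1. q l > 0"
  shows "edis gam q w k \<le> gam k * (M * M + M * (q k / q (Suc k)) * M)"
proof -
  have wX: "w \<in> X0p" "rho w \<le> M" using w by (auto simp: Bset_def)
  have wl: "\<And>l. 0 \<le> w l" "\<And>l. w l \<le> M" using X0pD(2)[OF wX(1)] X0p_comp_le_rho[OF wX(1)] wX(2) by (auto intro: order_trans)
  have N: "0 \<le> Ntot w" "Ntot w \<le> M" using X0p_Ntot_nonneg[OF wX(1)] X0p_Ntot_le_rho[OF wX(1)] wX(2) by auto
  have r: "q k / q (Suc k) > 0" using qp k by simp
  define a where "a = w 1 * w k"
  define b where "b = Ntot w * q k / q (Suc k) * w (Suc k)"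
  have M0: "M \<ge> 0" using wl(1)[of 0] wl(2)[of 0] by linarith
  have a0: "a \<ge> 0" "a \<le> M * M" unfolding a_def
    using wl(1)[of 1] wl(2)[of 1] wl(1)[of k] wl(2)[of k] M0 by (auto intro: mult_mono)
  have b': "b = Ntot w * (q k / q (Suc k)) * w (Suc k)" unfolding b_def by simp
  have b0: "b \<ge> 0" unfolding b' using N(1) wl(1)[of "Suc k"] r by (intro mult_nonneg_nonneg) auto
  have "Ntot w * (q k / q (Suc k)) \<le> M * (q k / q (Suc k))" using N r by (intro mult_right_mono) auto
  moreover have Mr: "0 \<le> M * (q k / q (Suc k))" by (intro mult_nonneg_nonneg M0 less_imp_le[OF r])
  ultimately have "b \<le> M * (q k / q (Suc k)) * M" unfolding b' using wl N r by (intro mult_mono) auto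
  moreover have "(sqrt a - sqrt b) ^ 2 \<le> a + b"
  proof -
    have "(sqrt a - sqrt b) ^ 2 = a + b - 2 * (sqrt a * sqrt b)"
      using a0 b0 by (simp add: power2_diff real_sqrt_pow2 mult_ac)
    moreover have "sqrt a * sqrt b \<ge> 0" using a0 b0 by simp
    ultimately show ?thesis by linarith
  qed
  ultimately have "(sqrt a - sqrt b) ^ 2 \<le> M * M + M * (q k / q (Suc k)) * M" using a0 by linarith
  then show ?thesis unfolding edis_def a_def[symmetric] b_def[symmetric] using g by (intro mult_left_mono) auto
qed

lemma edis_conv:
  assumes qp: "\<forall>l\<ge>1. q l > 0" and w: "\<And>k. w k \<in> Bset M" and v: "v \<in> Bset M" and c: "\<And>l. (\<lambda>k. w k l) \<longlonglongrightarrow> v l"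
  shows "(\<lambda>k. edis gam q (w k) l) \<longlonglongrightarrow> edis gam q v l"
proof -
  have wX: "w k \<in> X0p" "rho (w k) \<le> M" for k using w[of k] by (auto simp: Bset_def)
  have vX: "v \<in> X0p" "rho v \<le> M" using v by (auto simp: Bset_def)
  have N: "(\<lambda>k. Ntot (w k)) \<longlonglongrightarrow> Ntot v" by (rule Ntot_conv[OF wX vX c])
  have qS: "q (Suc l) \<noteq> 0" using qp[rule_format, of "Suc l"] by simp
  show ?thesis unfolding edis_def by (intro tendsto_intros c N) (simp add: qS)
qed

locale mainctx =
  fixes q gam y :: "nat \<Rightarrow> real" and R :: real
    and zm :: "nat \<Rightarrow> real \<Rightarrow> nat \<Rightarrow> real" and z :: "real \<Rightarrow> nat \<Rightarrow> real"
    and mj :: "nat \<Rightarrow> nat"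
  assumes q_pos: "\<forall>l\<ge>1. q l > 0" and q1: "q 1 = 1"
    and R_lim: "(\<lambda>l. q (Suc l) / q (Suc (Suc l))) \<longlonglongrightarrow> R" and R_pos: "0 < R"
    and gam_pos: "\<forall>l\<ge>1. gam l > 0"
    and y: "y \<in> X0p" and y1: "y 1 > 0"
    and trunc: "\<forall>m\<ge>2. truncated_solution gam q y m (zm m)"
    and mj: "strict_mono mj" "\<forall>j. mj j \<ge> 2"
    and conv: "\<forall>l. \<forall>T\<ge>0. uniform_limit {0..T} (\<lambda>j t. zm (mj j) t l) (\<lambda>t. z t l) sequentially"
    and zpos: "\<forall>t\<ge>0. z t \<in> X0p"
    and zrho: "\<forall>t\<ge>0. rho (z t) = rho y"
    and zA: "\<forall>s t. 0 \<le> s \<and> s \<le> t \<longrightarrow> Afun q (z t) \<le> Afun q (z s)"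
begin

lemma tr: "trunc gam q y (mj j) (zm (mj j))"
  by unfold_locales (use mj trunc gam_pos q_pos q1 y y1 in auto)

definition EL :: "nat \<Rightarrow> (nat \<Rightarrow> real) \<Rightarrow> real" where
  "EL L w = (\<Sum>k\<in>{1..L}. edis gam q w k)"

lemma zB: "t \<ge> 0 \<Longrightarrow> z t \<in> Bset (rho y)"
  using zpos zrho by (auto simp: Bset_def)

lemma zmB: assumes "t \<ge> 0" shows "zm (mj j) t \<in> Bset (rho y)"
proof -
  interpret T: trunc gam q y "mj j" "zm (mj j)" by (rule tr)
  show ?thesis unfolding Bset_def using T.u_X0p[OF assms] T.rho_u[OF assms] T.M0_le by simp
qed

lemma pw: assumes "t \<ge> 0" shows "(\<lambda>j. zm (mj j) t l) \<longlonglongrightarrow> z t l"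
  by (rule tendsto_uniform_limitI[where S = "{0..t}"]) (use conv assms in auto)

lemma rho_nonneg: "rho y \<ge> 0" by (rule X0p_rho_nonneg[OF y])

lemma EL_nonneg: "EL L w \<ge> 0"
  unfolding EL_def by (intro sum_nonneg edis_nonneg) (use gam_pos in auto)

lemma int_bound:
  assumes Bq: "Bq \<ge> 0" "\<forall>l\<ge>1. \<bar>ln (q l)\<bar> \<le> Bq * real l" and T: "T \<ge> 0"
  shows "(\<lambda>s. EL L (z s)) integrable_on {0..T}" "integral {0..T} (\<lambda>s. EL L (z s)) \<le> trunc.Cst (rho y) Bq"
proof -
  define f where "f j s = EL L (zm (mj j) s)" for j s
  define h where "h = (\<lambda>s::real. \<Sum>k\<in>{1..L}. gam k * (rho y * rho y + rho y * (q k / q (Suc k)) * rho y))"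
  have fi: "f j integrable_on {0..T}" for j
  proof -
    interpret Tr: trunc gam q y "mj j" "zm (mj j)" by (rule tr)
    have "continuous_on {0..T} (f j)" unfolding f_def EL_def
      by (intro continuous_on_sum continuous_on_subset[OF Tr.edis_cont]) auto
    then show ?thesis by (rule integrable_continuous_real)
  qed
  have hi: "h integrable_on {0..T}" unfolding h_def by (rule integrable_const_ivl)
  have le: "norm (f j s) \<le> h s" if "s \<in> {0..T}" for j s
  proof -
    have "f j s \<ge> 0" unfolding f_def by (rule EL_nonneg)
    moreover have "f j s \<le> h s" unfolding f_def EL_def h_def
      by (intro sum_mono edis_bound[OF zmB] ) (use that gam_pos q_pos in auto)
    ultimately show ?thesis by simp
  qed
  have lim: "(\<lambda>j. f j s) \<longlonglongrightarrow> EL L (z s)" if "s \<in> {0..T}" for s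
    unfolding f_def EL_def
    by (intro tendsto_sum edis_conv[OF q_pos zmB zB pw]) (use that in auto)
  show "(\<lambda>s. EL L (z s)) integrable_on {0..T}"
    by (rule dominated_convergence(1)[OF fi hi le lim])
  have ilim: "(\<lambda>j. integral {0..T} (f j)) \<longlonglongrightarrow> integral {0..T} (\<lambda>s. EL L (z s))"
    by (rule dominated_convergence(2)[OF fi hi le lim])
  have ev: "integral {0..T} (f j) \<le> trunc.Cst (rho y) Bq" if "j \<ge> L + 1" for j
  proof -
    interpret Tr: trunc gam q y "mj j" "zm (mj j)" by (rule tr)
    have "j \<le> mj j" by (rule seq_suble[OF mj(1)])
    then have "L < mj j" using that by simp
    then show ?thesis unfolding f_def EL_def by (rule Tr.trunc_int_bound[OF Bq T])
  qed
  show "integral {0..T} (\<lambda>s. EL L (z s)) \<le> trunc.Cst (rho y) Bq"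
    by (rule LIMSEQ_le_const2[OF ilim]) (use ev in blast)
qed

lemma exists_small:
  assumes Bq: "Bq \<ge> 0" "\<forall>l\<ge>1. \<bar>ln (q l)\<bar> \<le> Bq * real l"
  shows "\<exists>t\<ge>real k. EL k (z t) \<le> 1 / (real k + 1)"
proof (rule ccontr)
  assume "\<not> ?thesis"
  then have big: "EL k (z t) > 1 / (real k + 1)" if "t \<ge> real k" for t using that by force
  define C where "C = trunc.Cst (rho y) Bq"
  define T where "T = real k + (\<bar>C\<bar> + 1) * (real k + 1)"
  have kT: "real k \<le> T" unfolding T_def by simp
  have T0: "T \<ge> 0" using kT by simp
  have int0: "(\<lambda>s. EL k (z s)) integrable_on {0..T}" by (rule int_bound(1)[OF Bq T0])
  have int1: "(\<lambda>s. EL k (z s)) integrable_on {real k..T}" by (rule integrable_on_subinterval[OF int0]) auto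
  have "integral {real k..T} (\<lambda>s. 1 / (real k + 1)) \<le> integral {real k..T} (\<lambda>s. EL k (z s))"
    by (rule integral_le[OF _ int1]) (use big in \<open>auto intro: less_imp_le\<close>)
  moreover have "integral {real k..T} (\<lambda>s. 1 / (real k + 1)) = (T - real k) / (real k + 1)"
    using kT by simp
  moreover have "(T - real k) / (real k + 1) = \<bar>C\<bar> + 1" unfolding T_def by simp
  moreover have "integral {real k..T} (\<lambda>s. EL k (z s)) \<le> integral {0..T} (\<lambda>s. EL k (z s))"
    by (rule integral_subset_le[OF _ int1 int0]) (auto intro: EL_nonneg)
  moreover have "integral {0..T} (\<lambda>s. EL k (z s)) \<le> C" unfolding C_def by (rule int_bound(2)[OF Bq T0])
  ultimately show False by linarith
qed

end


lemma mono_seq_limit: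
  fixes f :: "real \<Rightarrow> real" and s :: "nat \<Rightarrow> real"
  assumes anti: "\<And>a b. 0 \<le> a \<Longrightarrow> a \<le> b \<Longrightarrow> f b \<le> f a"
    and s: "filterlim s at_top sequentially" and s0: "\<And>k. s k \<ge> 0"
    and lim: "(\<lambda>k. f (s k)) \<longlonglongrightarrow> Lm"
  shows "(f \<longlongrightarrow> Lm) at_top"
proof -
  have lower: "Lm \<le> f t" if t: "t \<ge> 0" for t
  proof -
    have "eventually (\<lambda>k. s k \<ge> t) sequentially" using s by (simp add: filterlim_at_top)
    then have "eventually (\<lambda>k. f (s k) \<le> f t) sequentially"
      by eventually_elim (use anti t in auto)
    then show ?thesis using lim by (intro tendsto_upperbound) auto
  qed
  show ?thesis
  proof (rule order_tendstoI)
    fix a assume "a < Lm"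
    then show "eventually (\<lambda>t. a < f t) at_top"
      unfolding eventually_at_top_linorder using lower by (intro exI[of _ 0]) (auto intro: less_le_trans)
  next
    fix a assume a: "Lm < a"
    have "eventually (\<lambda>k. f (s k) < a) sequentially" using order_tendstoD(2)[OF lim a] .
    then obtain k where k: "f (s k) < a" by (auto simp: eventually_sequentially)
    show "eventually (\<lambda>t. f t < a) at_top"
      unfolding eventually_at_top_linorder
    proof (intro exI allI impI)
      fix t assume "t \<ge> s k"
      then have "f t \<le> f (s k)" using anti s0 by auto
      then show "f t < a" using k by simp
    qed
  qed
qed

lemma rho_diff_le:
  assumes z: "z \<in> X0p" and w: "w \<in> X0p"
  shows "summable (\<lambda>l. real l * \<bar>(z - w) l\<bar>)" "\<bar>rho z - rho w\<bar> \<le> Xnorm (z - w)"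
proof -
  have sz: "summable (\<lambda>l. real l * z l)" and sw: "summable (\<lambda>l. real l * w l)"
    using X0pD(3) z w by auto
  have b: "norm (real l * \<bar>(z - w) l\<bar>) \<le> real l * z l + real l * w l" for l
  proof -
    have "\<bar>z l - w l\<bar> \<le> z l + w l" using X0pD(2)[OF z, of l] X0pD(2)[OF w, of l] by linarith
    then have "real l * \<bar>z l - w l\<bar> \<le> real l * (z l + w l)" by (intro mult_left_mono) auto
    then show ?thesis by (simp add: algebra_simps)
  qed
  show s: "summable (\<lambda>l. real l * \<bar>(z - w) l\<bar>)"
    by (rule summable_comparison_test'[OF summable_add[OF sz sw], of 0]) (use b in auto)
  have "rho z - rho w = (\<Sum>l. real l * z l - real l * w l)" unfolding rho_def by (rule suminf_diff[OF sz sw])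
  also have "\<dots> = (\<Sum>l. real l * (z - w) l)" by (simp add: algebra_simps)
  finally have e: "rho z - rho w = (\<Sum>l. real l * (z - w) l)" .
  have "norm (\<Sum>l. real l * (z - w) l) \<le> (\<Sum>l. real l * \<bar>(z - w) l\<bar>)"
    by (rule norm_suminf_le[OF _ s]) (simp add: abs_mult)
  then show "\<bar>rho z - rho w\<bar> \<le> Xnorm (z - w)" unfolding Xnorm_def e by simp
qed

lemma Xnorm_split_bound:
  assumes z: "z \<in> X0p" and w: "w \<in> X0p"
  shows "Xnorm (z - w) \<le> (\<Sum>l<L. real l * \<bar>z l - w l\<bar>) + (rho z - (\<Sum>l<L. real l * z l)) + (rho w - (\<Sum>l<L. real l * w l))"
proof -
  have sz: "summable (\<lambda>l. real l * z l)" and sw: "summable (\<lambda>l. real l * w l)"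
    using X0pD(3) z w by auto
  have s: "summable (\<lambda>l. real l * \<bar>(z - w) l\<bar>)" by (rule rho_diff_le(1)[OF z w])
  have "Xnorm (z - w) = (\<Sum>n. real (n + L) * \<bar>(z - w) (n + L)\<bar>) + (\<Sum>l<L. real l * \<bar>(z - w) l\<bar>)"
    unfolding Xnorm_def by (rule suminf_split_initial_segment[OF s])
  also have "(\<Sum>n. real (n + L) * \<bar>(z - w) (n + L)\<bar>) \<le> (\<Sum>n. real (n + L) * z (n + L) + real (n + L) * w (n + L))"
  proof (rule suminf_le)
    fix n
    have "\<bar>z (n + L) - w (n + L)\<bar> \<le> z (n + L) + w (n + L)"
      using X0pD(2)[OF z, of "n + L"] X0pD(2)[OF w, of "n + L"] by linarith
    then have "real (n + L) * \<bar>z (n + L) - w (n + L)\<bar> \<le> real (n + L) * (z (n + L) + w (n + L))"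
      by (intro mult_left_mono) auto
    then show "real (n + L) * \<bar>(z - w) (n + L)\<bar> \<le> real (n + L) * z (n + L) + real (n + L) * w (n + L)"
      by (simp add: algebra_simps)
  next
    show "summable (\<lambda>n. real (n + L) * \<bar>(z - w) (n + L)\<bar>)"
      using s summable_iff_shift[of "\<lambda>l. real l * \<bar>(z - w) l\<bar>" L] by simp
    show "summable (\<lambda>n. real (n + L) * z (n + L) + real (n + L) * w (n + L))"
      using summable_add[OF sz sw] summable_iff_shift[of "\<lambda>l. real l * z l + real l * w l" L] by simp
  qed
  also have "(\<Sum>n. real (n + L) * z (n + L) + real (n + L) * w (n + L))
      = (\<Sum>n. real (n + L) * z (n + L)) + (\<Sum>n. real (n + L) * w (n + L))"
  proof (rule suminf_add[symmetric])
    show "summable (\<lambda>n. real (n + L) * z (n + L))" using sz summable_iff_shift[of "\<lambda>l. real l * z l" L] by simp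
    show "summable (\<lambda>n. real (n + L) * w (n + L))" using sw summable_iff_shift[of "\<lambda>l. real l * w l" L] by simp
  qed
  also have "(\<Sum>n. real (n + L) * z (n + L)) = rho z - (\<Sum>l<L. real l * z l)"
    unfolding rho_def using suminf_split_initial_segment[OF sz, of L] by simp
  also have "(\<Sum>n. real (n + L) * w (n + L)) = rho w - (\<Sum>l<L. real l * w l)"
    unfolding rho_def using suminf_split_initial_segment[OF sw, of L] by simp
  finally show ?thesis by (simp add: fun_diff_def add_ac)
qed

context mainctx
begin

definition omg :: "(nat \<Rightarrow> real) set" where
  "omg = {w \<in> Xsp. \<exists>tk :: nat \<Rightarrow> real.
     filterlim tk at_top sequentially \<and> limitin weakstar (\<lambda>k. z (tk k)) w sequentially}"

lemma seq_omega:
  assumes s: "filterlim s at_top sequentially" and s0: "\<And>k. s k \<ge> 0"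
  obtains r v where "strict_mono r" "v \<in> Bset (rho y)" "v \<in> omg" "\<And>l. (\<lambda>k. z (s (r k)) l) \<longlonglongrightarrow> v l"
    "limitin weakstar (\<lambda>k. z (s (r k))) v sequentially"
proof -
  obtain r v where rv: "strict_mono r" "v \<in> Bset (rho y)" "\<forall>l. (\<lambda>k. z (s (r k)) l) \<longlonglongrightarrow> v l"
    using Bset_seq[OF rho_nonneg, of "\<lambda>k. z (s k)"] zB s0 by blast
  have wX: "z (s (r k)) \<in> X0p" "rho (z (s (r k))) \<le> rho y" for k using zB[OF s0] by (auto simp: Bset_def)
  have vX: "v \<in> X0p" "rho v \<le> rho y" using rv(2) by (auto simp: Bset_def)
  have lw: "limitin weakstar (\<lambda>k. z (s (r k))) v sequentially"
    by (rule limitin_weakstar_seq[OF wX vX]) (use rv(3) in auto)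
  have "filterlim (\<lambda>k. s (r k)) at_top sequentially"
    by (rule filterlim_compose[OF s filterlim_subseq[OF rv(1)]])
  then have "v \<in> omg" unfolding omg_def using lw vX(1) X0p_Xsp by (auto intro!: exI[of _ "\<lambda>k. s (r k)"])
  then show ?thesis using that rv lw by blast
qed

lemma Atil_anti: "0 \<le> a \<Longrightarrow> a \<le> b \<Longrightarrow> Atil q R (z b) \<le> Atil q R (z a)"
  using Atil_eq[OF q_pos q1 R_lim R_pos] zpos zrho zA by simp

lemma main_exists:
  "\<exists>zinf\<in>omg. equilibrium gam q zinf \<and> 0 \<le> rho zinf \<and> rho zinf \<le> rho y
     \<and> ((\<lambda>t. Atil q R (z t)) \<longlongrightarrow> Atil q R zinf) at_top"
proof -
  obtain Bq where Bq: "Bq \<ge> 0" "\<forall>l\<ge>1. \<bar>ln (q l)\<bar> \<le> Bq * real l"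
    using lnq_lin[OF q_pos q1 R_lim R_pos] by blast
  have "\<forall>k. \<exists>t. t \<ge> real k \<and> EL k (z t) \<le> 1 / (real k + 1)" using exists_small[OF Bq] by blast
  then obtain tk where tk: "\<And>k. tk k \<ge> real k" "\<And>k. EL k (z (tk k)) \<le> 1 / (real k + 1)"
    using choice[of "\<lambda>k t. t \<ge> real k \<and> EL k (z t) \<le> 1 / (real k + 1)"] by blast
  have tk0: "tk k \<ge> 0" for k using tk(1)[of k] by simp
  have tklim: "filterlim tk at_top sequentially"
    by (rule filterlim_at_top_mono[OF filterlim_real_sequentially]) (use tk(1) in auto)
  obtain r v where rv: "strict_mono r" "v \<in> Bset (rho y)" "v \<in> omg"
      "\<And>l. (\<lambda>k. z (tk (r k)) l) \<longlonglongrightarrow> v l"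
    using seq_omega[OF tklim tk0] by blast
  have vX: "v \<in> X0p" "rho v \<le> rho y" using rv(2) by (auto simp: Bset_def)
  have wB: "z (tk (r k)) \<in> Bset (rho y)" for k using zB[OF tk0] .
  have ed0: "edis gam q v l = 0" if l: "l \<ge> 1" for l
  proof -
    have c: "(\<lambda>k. edis gam q (z (tk (r k))) l) \<longlonglongrightarrow> edis gam q v l"
      by (rule edis_conv[OF q_pos wB rv(2) rv(4)])
    have d: "(\<lambda>k. 1 / real (Suc k)) \<longlonglongrightarrow> 0" by (rule LIMSEQ_Suc) (rule lim_inverse_n')
    have "edis gam q (z (tk (r k))) l \<le> 1 / real (Suc k)" if k: "k \<ge> l" for k
    proof -
      have rk: "k \<le> r k" by (rule seq_suble[OF rv(1)])
      have "edis gam q (z (tk (r k))) l \<le> EL (r k) (z (tk (r k)))"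
        unfolding EL_def by (rule member_le_sum) (use l k rk gam_pos in \<open>auto intro: edis_nonneg\<close>)
      also have "\<dots> \<le> 1 / (real (r k) + 1)" by (rule tk(2))
      also have "\<dots> \<le> 1 / real (Suc k)" using rk by (simp add: frac_le)
      finally show ?thesis .
    qed
    then have "edis gam q v l \<le> 0" by (intro LIMSEQ_le[OF c d]) blast
    moreover have "edis gam q v l \<ge> 0" by (rule edis_nonneg) (use gam_pos l in simp)
    ultimately show ?thesis by simp
  qed
  have J0: "Jflux gam q v l = 0" if l: "l \<ge> 1" for l
  proof -
    have g: "gam l > 0" using gam_pos l by simp
    have "(sqrt (v 1 * v l) - sqrt (Ntot v * q l / q (Suc l) * v (Suc l))) ^ 2 = 0"
      using ed0[OF l] g unfolding edis_def by simp
    then have "v 1 * v l = Ntot v * q l / q (Suc l) * v (Suc l)" by simp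
    then show ?thesis using l by (simp add: Jflux_def)
  qed
  have "Jflux gam q v 0 = 0"
  proof -
    have "Jflux gam q v (Suc k) = 0" for k by (rule J0) simp
    then have "(\<lambda>k. gam (Suc k) * (v 1 * v (Suc k) - Ntot v * q (Suc k) / q (Suc (Suc k)) * v (Suc (Suc k)))) = (\<lambda>k. 0)"
      by (simp add: Jflux_def fun_eq_iff)
    then show ?thesis by (simp add: Jflux_def)
  qed
  then have eq: "equilibrium gam q v" unfolding equilibrium_def using J0 vX(1)
    by (metis not_gr0 less_one not_le)
  have at: "(\<lambda>k. Atil q R (z (tk (r k)))) \<longlonglongrightarrow> Atil q R v"
    by (rule Atil_cont[OF q_pos q1 R_lim R_pos wB rv(2) rv(4)])
  have sl: "filterlim (\<lambda>k. tk (r k)) at_top sequentially"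
    by (rule filterlim_compose[OF tklim filterlim_subseq[OF rv(1)]])
  have "((\<lambda>t. Atil q R (z t)) \<longlongrightarrow> Atil q R v) at_top"
    by (rule mono_seq_limit[OF Atil_anti sl tk0 at])
  then show ?thesis using rv(3) eq vX X0p_rho_nonneg by blast
qed

lemma omega_single:
  assumes om: "omg = {zinf}"
  shows "limitin weakstar z zinf at_top"
proof -
  have zi: "zinf \<in> Xsp" using om unfolding omg_def by blast
  show ?thesis unfolding limitin_def
  proof (intro conjI allI impI)
    show "zinf \<in> topspace weakstar" using zi weakstar_topspace by simp
    fix U assume U: "openin weakstar U \<and> zinf \<in> U"
    show "eventually (\<lambda>t. z t \<in> U) at_top"
    proof (rule ccontr)
      assume ne: "\<not> eventually (\<lambda>t. z t \<in> U) at_top"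
      have "\<forall>k::nat. \<exists>t. t \<ge> real k \<and> z t \<notin> U"
      proof
        fix k :: nat
        from ne have "\<not> (\<exists>N. \<forall>t\<ge>N. z t \<in> U)" unfolding eventually_at_top_linorder by blast
        then show "\<exists>t. t \<ge> real k \<and> z t \<notin> U" by (meson)
      qed
      then obtain s where s: "\<And>k. s k \<ge> real k" "\<And>k. z (s k) \<notin> U"
        using choice[of "\<lambda>k t. t \<ge> real k \<and> z t \<notin> U"] by blast
      have s0: "s k \<ge> 0" for k using s(1)[of k] by simp
      have slim: "filterlim s at_top sequentially"
        by (rule filterlim_at_top_mono[OF filterlim_real_sequentially]) (use s(1) in auto)
      obtain r v where rv: "v \<in> omg" "limitin weakstar (\<lambda>k. z (s (r k))) v sequentially"
        using seq_omega[OF slim s0] by blast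
      have "v = zinf" using rv(1) om by simp
      then have "eventually (\<lambda>k. z (s (r k)) \<in> U) sequentially"
        using rv(2) U unfolding limitin_def by blast
      then obtain k where "z (s (r k)) \<in> U" by (auto simp: eventually_sequentially)
      then show False using s(2) by blast
    qed
  qed
qed

lemma strong_iff:
  assumes zi: "zinf \<in> X0p" and lim: "limitin weakstar z zinf at_top"
  shows "(((\<lambda>t. Xnorm (z t - zinf)) \<longlongrightarrow> 0) at_top) \<longleftrightarrow> rho zinf = rho y"
proof
  assume X: "((\<lambda>t. Xnorm (z t - zinf)) \<longlongrightarrow> 0) at_top"
  have "eventually (\<lambda>t. \<bar>rho y - rho zinf\<bar> \<le> Xnorm (z t - zinf)) at_top"
    unfolding eventually_at_top_linorder
    by (intro exI[of _ 0] allI impI) (use rho_diff_le(2)[OF zpos[rule_format] zi] zrho in auto)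
  then have "\<bar>rho y - rho zinf\<bar> \<le> 0" by (rule tendsto_lowerbound[OF X]) simp
  then show "rho zinf = rho y" by simp
next
  assume rz: "rho zinf = rho y"
  have comp: "((\<lambda>t. z t l) \<longlongrightarrow> zinf l) at_top" for l
  proof (cases "l = 0")
    case True
    have "eventually (\<lambda>t. z t l = zinf l) at_top"
      unfolding eventually_at_top_linorder using True X0pD(1)[OF zi] X0pD(1) zpos
      by (intro exI[of _ 0]) auto
    then show ?thesis by (rule tendsto_eventually)
  next
    case False
    then show ?thesis using limitin_weakstar_comp[OF lim] by simp
  qed
  show "((\<lambda>t. Xnorm (z t - zinf)) \<longlongrightarrow> 0) at_top"
  proof (rule tendstoI)
    fix e :: real assume e: "e > 0"
    have e4: "e / 4 > 0" using e by simp
    obtain L where L: "\<forall>n\<ge>L. norm (\<Sum>i. real (i + n) * zinf (i + n)) < e / 4"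
      using suminf_exist_split[OF e4 X0pD(3)[OF zi]] by blast
    have sw: "summable (\<lambda>l. real l * zinf l)" by (rule X0pD(3)[OF zi])
    have tw: "rho zinf - (\<Sum>l<L. real l * zinf l) < e / 4"
    proof -
      have "rho zinf = (\<Sum>i. real (i + L) * zinf (i + L)) + (\<Sum>l<L. real l * zinf l)"
        unfolding rho_def by (rule suminf_split_initial_segment[OF sw])
      moreover have "norm (\<Sum>i. real (i + L) * zinf (i + L)) < e / 4" using L by blast
      ultimately show ?thesis by simp
    qed
    have A: "((\<lambda>t. \<Sum>l<L. real l * \<bar>z t l - zinf l\<bar>) \<longlongrightarrow> (\<Sum>l<L. real l * \<bar>zinf l - zinf l\<bar>)) at_top"
      by (intro tendsto_intros comp)
    then have A': "eventually (\<lambda>t. (\<Sum>l<L. real l * \<bar>z t l - zinf l\<bar>) < e / 4) at_top"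
      using e4 by (intro order_tendstoD(2)[OF A]) simp
    have P: "((\<lambda>t. \<Sum>l<L. real l * z t l) \<longlongrightarrow> (\<Sum>l<L. real l * zinf l)) at_top"
      by (intro tendsto_intros comp)
    have P': "eventually (\<lambda>t. (\<Sum>l<L. real l * zinf l) - e / 4 < (\<Sum>l<L. real l * z t l)) at_top"
      using e4 by (intro order_tendstoD(1)[OF P]) simp
    have pos: "eventually (\<lambda>t::real. t \<ge> 0) at_top" by (rule eventually_ge_at_top)
    show "eventually (\<lambda>t. dist (Xnorm (z t - zinf)) 0 < e) at_top"
      using A' P' pos
    proof eventually_elim
      case (elim t)
      have zt: "z t \<in> X0p" using zpos elim(3) by simp
      have b: "Xnorm (z t - zinf) \<le> (\<Sum>l<L. real l * \<bar>z t l - zinf l\<bar>) + (rho (z t) - (\<Sum>l<L. real l * z t l))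
          + (rho zinf - (\<Sum>l<L. real l * zinf l))"
        by (rule Xnorm_split_bound[OF zt zi])
      have nn: "Xnorm (z t - zinf) \<ge> 0"
        unfolding Xnorm_def by (intro suminf_nonneg rho_diff_le(1)[OF zt zi]) auto
      have "rho (z t) = rho y" using zrho elim(3) by simp
      then have "Xnorm (z t - zinf) < e" using b elim(1,2) tw rz by linarith
      then show ?case using nn by (simp add: dist_real_def)
    qed
  qed
qed

lemma orbit_compact: "compactin weakstar (weakstar closure_of {z t | t. t \<ge> 0})"
proof -
  have sub: "{z t | t. t \<ge> 0} \<subseteq> Bset (rho y)" using zB by auto
  have "weakstar closure_of {z t | t. t \<ge> 0} \<subseteq> Bset (rho y)"
    by (rule closure_of_minimal[OF sub Bset_closedin])
  moreover have "closedin weakstar (weakstar closure_of {z t | t. t \<ge> 0})" by (rule closedin_closure_of)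
  ultimately show ?thesis using closed_compactin[OF Bset_weakstar_compact[OF rho_nonneg]] by blast
qed

end


theorem corollary16:
  fixes q gam y :: "nat \<Rightarrow> real" and R :: real
    and zm :: "nat \<Rightarrow> real \<Rightarrow> nat \<Rightarrow> real" and z :: "real \<Rightarrow> nat \<Rightarrow> real"
    and mj :: "nat \<Rightarrow> nat"
  assumes q_pos: "\<forall>l\<ge>1. q l > 0" and q1: "q 1 = 1"
    and R_lim: "(\<lambda>l. q (Suc l) / q (Suc (Suc l))) \<longlonglongrightarrow> R" and R_pos: "0 < R"
    and gam_pos: "\<forall>l\<ge>1. gam l > 0"
    and gam_lim: "(\<lambda>l. gam (Suc l) / real (Suc l)) \<longlonglongrightarrow> 0"
    and y: "y \<in> X0p" and y1: "y 1 > 0" and rho0: "rho y > 0"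
    and trunc: "\<forall>m\<ge>2. truncated_solution gam q y m (zm m)"
    and mj: "strict_mono mj" "\<forall>j. mj j \<ge> 2"
    and conv: "\<forall>l. \<forall>T\<ge>0. uniform_limit {0..T} (\<lambda>j t. zm (mj j) t l) (\<lambda>t. z t l) sequentially"
    and zX: "\<forall>t\<ge>0. z t \<in> Xsp"
    and zcont: "\<forall>t\<ge>0. ((\<lambda>s. Xnorm (z s - z t)) \<longlongrightarrow> 0) (at t within {0..})"
    and zpos: "\<forall>t\<ge>0. z t \<in> X0p"
    and zrho: "\<forall>t\<ge>0. rho (z t) = rho y"
    and zA: "\<forall>s t. 0 \<le> s \<and> s \<le> t \<longrightarrow> Afun q (z t) \<le> Afun q (z s)"
  defines "\<omega> \<equiv> {w \<in> Xsp. \<exists>tk :: nat \<Rightarrow> real.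
                   filterlim tk at_top sequentially \<and> limitin weakstar (\<lambda>k. z (tk k)) w sequentially}"
  shows "compactin weakstar (weakstar closure_of {z t | t. t \<ge> 0})
     \<and> (\<exists>zinf \<in> \<omega>. equilibrium gam q zinf
          \<and> 0 \<le> rho zinf \<and> rho zinf \<le> rho y
          \<and> ((\<lambda>t. Atil q R (z t)) \<longlongrightarrow> Atil q R zinf) at_top
          \<and> (\<omega> = {zinf} \<longrightarrow>
               limitin weakstar z zinf at_top
               \<and> ((((\<lambda>t. Xnorm (z t - zinf)) \<longlongrightarrow> 0) at_top) \<longleftrightarrow> rho zinf = rho y)))"
  proof -
  interpret M: mainctx q gam y R zm z mj
    by unfold_locales (use q_pos q1 R_lim R_pos gam_pos y y1 trunc mj conv zpos zrho zA in auto)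
  have om: "\<omega> = M.omg" unfolding \<omega>_def M.omg_def by simp
  obtain zinf where zinf: "zinf \<in> M.omg" "equilibrium gam q zinf" "0 \<le> rho zinf" "rho zinf \<le> rho y"
    "((\<lambda>t. Atil q R (z t)) \<longlongrightarrow> Atil q R zinf) at_top"
    using M.main_exists by blast
  have zi: "zinf \<in> X0p" using zinf(2) by (simp add: equilibrium_def)
  have single: "limitin weakstar z zinf at_top
      \<and> ((((\<lambda>t. Xnorm (z t - zinf)) \<longlongrightarrow> 0) at_top) \<longleftrightarrow> rho zinf = rho y)"
    if "\<omega> = {zinf}"
  proof -
    have l: "limitin weakstar z zinf at_top" using M.omega_single that om by simp
    then show ?thesis using M.strong_iff[OF zi l] by simp
  qed
  show ?thesis using M.orbit_compact zinf single om by blast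
qed

end
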